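(* Let $\rho\in(0,\frac\pi2)$, $k>0$, $\eta>0$. For all $\delta_\omega\in\mathbb R^N$ and all $\tilde\theta,\tilde\theta^*\in\mathbb S(\rho)$, setting $\delta_\theta:=\tilde\theta-\tilde\theta^*$, the function $$V:=\tfrac12\delta_\omega^TM\delta_\omega+k\big(U(\tilde\theta)-U(\tilde\theta^* )-\nabla U(\tilde\theta^* )^T(\tilde\theta-\tilde\theta^* )\big)+\eta\big(\nabla U(\tilde\theta)-\nabla U(\tilde\theta^* )\big)^TY^TM^{1/2}\delta_\omega$$ satisfies $$V\le\tfrac34\delta_\omega^TM\delta_\omega+\big(\tfrac12k\lambda_N+\eta^2\lambda_N^2\big)|\delta_\theta|^2,$$ $$V\ge\tfrac14\delta_\omega^TM\delta_\omega+\big(\tfrac12k\lambda_2\sin(\rho)-\eta^2\lambda_N^2\big)|\delta_\theta|^2,$$ where $\lambda_2$ and $\lambda_N$ are the second-smallest and largest eigenvalues of $M^{-1}L_B$.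
   Context: Let $(\mathcal N,\mathcal E)$ be a connected undirected graph, $\mathcal N=\{1,\dots,N\}$, $E=|\mathcal E|$, with edge weights $B^0_{ij}>0$. Fix an edge orientation, let $A\in\mathbb R^{N\times E}$ be the node-edge incidence matrix, $\Gamma=\mathrm{diag}(B^0_{ij},\{i,j\}\in\mathcal E)$ and $L_B=A\Gamma A^T$. Let $M=\mathrm{diag}(M_1,\dots,M_N)$ with $M_i>0$ and $Y\in\mathbb R^{N\times(N-1)}$ a matrix whose columns form an orthonormal basis of the null space of $\mathbb 1_N^TM^{1/2}$. Define $U(\tilde\theta):=-\mathbb 1_E^T\Gamma\cos(A^TM^{-1/2}Y\tilde\theta)$ for $\tilde\theta\in\mathbb R^{N-1}$ (cosine elementwise), with gradient $\nabla U(\tilde\theta)=Y^TM^{-1/2}A\Gamma\sin(A^TM^{-1/2}Y\tilde\theta)$. For $\rho\in(0,\frac\pi2)$, $\mathbb S(\rho):=\{\tilde\theta:\max_l|(A^TM^{-1/2}Y\tilde\theta)_l|<\frac\pi2-\rho\}$. $|\cdot|$ is the Euclidean norm. *)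

theory Defs
  imports "Jordan_Normal_Form.Char_Poly" "HOL-Computational_Algebra.Polynomial"
begin

text \<open>Graph on nodes 0..N-1; oriented edges given by the list es (edge l goes from
 fst (es!l) to snd (es!l)); edge weights w l (the B^0_{ij}); node inertias m i (the M_i).\<close>

definition adjacent :: "(nat \<times> nat) list \<Rightarrow> nat \<Rightarrow> nat \<Rightarrow> bool" where
  "adjacent es i j \<longleftrightarrow> (i, j) \<in> set es \<or> (j, i) \<in> set es"

definition graph_ok :: "nat \<Rightarrow> (nat \<times> nat) list \<Rightarrow> bool" where
  "graph_ok N es \<longleftrightarrow>
     (\<forall>l < length es. fst (es!l) < N \<and> snd (es!l) < N \<and> fst (es!l) \<noteq> snd (es!l)) \<and>
     (\<forall>l < length es. \<forall>l' < length es. l \<noteq> l' \<longrightarrow>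
        {fst (es!l), snd (es!l)} \<noteq> {fst (es!l'), snd (es!l')})"

definition connected_graph :: "nat \<Rightarrow> (nat \<times> nat) list \<Rightarrow> bool" where
  "connected_graph N es \<longleftrightarrow> (\<forall>i < N. \<forall>j < N. (adjacent es)\<^sup>*\<^sup>* i j)"

definition inc_mat :: "nat \<Rightarrow> (nat \<times> nat) list \<Rightarrow> real mat" where
  "inc_mat N es = mat N (length es)
     (\<lambda>(i, l). if i = fst (es!l) then 1 else if i = snd (es!l) then -1 else 0)"

definition diag_of :: "nat \<Rightarrow> (nat \<Rightarrow> real) \<Rightarrow> real mat" where
  "diag_of n d = mat n n (\<lambda>(i, j). if i = j then d i else 0)"

definition Gam :: "(nat \<times> nat) list \<Rightarrow> (nat \<Rightarrow> real) \<Rightarrow> real mat" where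
  "Gam es w = diag_of (length es) w"

definition LB :: "nat \<Rightarrow> (nat \<times> nat) list \<Rightarrow> (nat \<Rightarrow> real) \<Rightarrow> real mat" where
  "LB N es w = inc_mat N es * Gam es w * transpose_mat (inc_mat N es)"

definition Mmat :: "nat \<Rightarrow> (nat \<Rightarrow> real) \<Rightarrow> real mat" where
  "Mmat N m = diag_of N m"

definition Msqrt :: "nat \<Rightarrow> (nat \<Rightarrow> real) \<Rightarrow> real mat" where
  "Msqrt N m = diag_of N (\<lambda>i. sqrt (m i))"

definition Minvsqrt :: "nat \<Rightarrow> (nat \<Rightarrow> real) \<Rightarrow> real mat" where
  "Minvsqrt N m = diag_of N (\<lambda>i. 1 / sqrt (m i))"

definition Minv :: "nat \<Rightarrow> (nat \<Rightarrow> real) \<Rightarrow> real mat" where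
  "Minv N m = diag_of N (\<lambda>i. 1 / m i)"

definition edge_angles :: "nat \<Rightarrow> (nat \<times> nat) list \<Rightarrow> (nat \<Rightarrow> real) \<Rightarrow> real mat \<Rightarrow> real vec \<Rightarrow> real vec" where
  "edge_angles N es m Y th = transpose_mat (inc_mat N es) * Minvsqrt N m * Y *\<^sub>v th"

definition Upot :: "nat \<Rightarrow> (nat \<times> nat) list \<Rightarrow> (nat \<Rightarrow> real) \<Rightarrow> (nat \<Rightarrow> real) \<Rightarrow> real mat \<Rightarrow> real vec \<Rightarrow> real" where
  "Upot N es w m Y th =
     - (vec (length es) (\<lambda>_. 1) \<bullet> (Gam es w *\<^sub>v map_vec cos (edge_angles N es m Y th)))"

definition gradU :: "nat \<Rightarrow> (nat \<times> nat) list \<Rightarrow> (nat \<Rightarrow> real) \<Rightarrow> (nat \<Rightarrow> real) \<Rightarrow> real mat \<Rightarrow> real vec \<Rightarrow> real vec" where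
  "gradU N es w m Y th =
     transpose_mat Y * Minvsqrt N m * inc_mat N es * Gam es w *\<^sub>v map_vec sin (edge_angles N es m Y th)"

definition Sset :: "nat \<Rightarrow> (nat \<times> nat) list \<Rightarrow> (nat \<Rightarrow> real) \<Rightarrow> real mat \<Rightarrow> real \<Rightarrow> real vec set" where
  "Sset N es m Y \<rho> = {th \<in> carrier_vec (N - 1).
      \<forall>l < length es. \<bar>edge_angles N es m Y th $ l\<bar> < pi / 2 - \<rho>}"

text \<open>Eigenvalues of M^{-1} L_B counted with multiplicity (roots of the characteristic
 polynomial), in increasing order; index 0 is the smallest, index N-1 the largest.\<close>
definition eigs :: "nat \<Rightarrow> (nat \<times> nat) list \<Rightarrow> (nat \<Rightarrow> real) \<Rightarrow> (nat \<Rightarrow> real) \<Rightarrow> real list" where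
  "eigs N es w m = sorted_list_of_multiset (proots (char_poly (Minv N m * LB N es w)))"

definition lambda2 :: "nat \<Rightarrow> (nat \<times> nat) list \<Rightarrow> (nat \<Rightarrow> real) \<Rightarrow> (nat \<Rightarrow> real) \<Rightarrow> real" where
  "lambda2 N es w m = eigs N es w m ! 1"

definition lambdaN :: "nat \<Rightarrow> (nat \<times> nat) list \<Rightarrow> (nat \<Rightarrow> real) \<Rightarrow> (nat \<Rightarrow> real) \<Rightarrow> real" where
  "lambdaN N es w m = eigs N es w m ! (N - 1)"

end

theory Submission
  imports Defs
begin

lemma mv_carrier_iff: "(A *\<^sub>v v \<in> carrier_vec n) = (dim_row A = n)"
  unfolding carrier_vec_def by simp

lemma diag_carrier[simp]: "diag_of n d \<in> carrier_mat n n"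
  unfolding diag_of_def by auto

lemma diag_mult_vec: "x \<in> carrier_vec n \<Longrightarrow> diag_of n d *\<^sub>v x = vec n (\<lambda>i. d i * x $ i)"
proof (rule eq_vecI)
  fix i assume x: "x \<in> carrier_vec n" and i: "i < dim_vec (vec n (\<lambda>i. d i * x $ i))"
  hence i: "i < n" by simp
  have "row (diag_of n d) i \<bullet> x = (\<Sum>j = 0..<n. (if i = j then d i else 0) * x $ j)"
    using x i unfolding diag_of_def scalar_prod_def by (auto intro!: sum.cong)
  also have "\<dots> = (\<Sum>j \<in> {0..<n}. if j = i then d i * x $ i else 0)" by (rule sum.cong) auto
  also have "\<dots> = d i * x $ i" using i by simp
  finally show "(diag_of n d *\<^sub>v x) $ i = vec n (\<lambda>i. d i * x $ i) $ i"
    using i unfolding diag_of_def by simp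
qed (simp add: diag_of_def)

lemma diag_transpose[simp]: "transpose_mat (diag_of n d) = diag_of n d"
  unfolding diag_of_def by (rule eq_matI) auto

lemma diag_mult: "diag_of n f * diag_of n g = diag_of n (\<lambda>i. f i * g i)"
proof (rule eq_matI)
  fix i j assume "i < dim_row (diag_of n (\<lambda>i. f i * g i))" "j < dim_col (diag_of n (\<lambda>i. f i * g i))"
  hence ij: "i < n" "j < n" by (auto simp: diag_of_def)
  have "row (diag_of n f) i \<bullet> col (diag_of n g) j = (\<Sum>k = 0..<n. (if i = k then f i else 0) * (if k = j then g j else 0))"
    using ij unfolding diag_of_def scalar_prod_def by (auto intro!: sum.cong)
  also have "\<dots> = (\<Sum>k = 0..<n. if k = i then (if i = j then f i * g j else 0) else 0)"
    by (rule sum.cong) auto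
  also have "\<dots> = (if i = j then f i * g j else 0)" using ij by simp
  finally show "(diag_of n f * diag_of n g) $$ (i, j) = diag_of n (\<lambda>i. f i * g i) $$ (i, j)"
    using ij unfolding diag_of_def by auto
qed (auto simp: diag_of_def)

lemma inc_carrier[simp]: "inc_mat N es \<in> carrier_mat N (length es)"
  unfolding inc_mat_def by auto

lemma incT_vec:
  assumes g: "graph_ok N es" and z: "z \<in> carrier_vec N"
  shows "transpose_mat (inc_mat N es) *\<^sub>v z = vec (length es) (\<lambda>l. z $ fst (es!l) - z $ snd (es!l))"
proof (rule eq_vecI)
  fix l assume "l < dim_vec (vec (length es) (\<lambda>l. z $ fst (es!l) - z $ snd (es!l)))"
  hence l: "l < length es" by simp
  with g have a: "fst (es!l) < N" "snd (es!l) < N" "fst (es!l) \<noteq> snd (es!l)" unfolding graph_ok_def by auto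
  have "row (transpose_mat (inc_mat N es)) l \<bullet> z =
     (\<Sum>i = 0..<N. (if i = fst (es!l) then z $ i else 0) - (if i = snd (es!l) then z $ i else 0))"
    using z l a unfolding inc_mat_def scalar_prod_def by (auto intro!: sum.cong)
  also have "\<dots> = z $ fst (es!l) - z $ snd (es!l)" using a by (simp add: sum_subtractf)
  finally show "(transpose_mat (inc_mat N es) *\<^sub>v z) $ l = vec (length es) (\<lambda>l. z $ fst (es!l) - z $ snd (es!l)) $ l"
    using l by (subst index_mult_mat_vec) (auto simp: inc_mat_def)
qed (simp add: inc_mat_def)

definition Kmat :: "nat \<Rightarrow> (nat \<times> nat) list \<Rightarrow> (nat \<Rightarrow> real) \<Rightarrow> (nat \<Rightarrow> real) \<Rightarrow> real mat" where
  "Kmat N es w m = Minvsqrt N m * LB N es w * Minvsqrt N m"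

definition edif :: "nat \<Rightarrow> (nat \<times> nat) list \<Rightarrow> (nat \<Rightarrow> real) \<Rightarrow> real vec \<Rightarrow> real vec" where
  "edif N es m y = transpose_mat (inc_mat N es) *\<^sub>v (Minvsqrt N m *\<^sub>v y)"

lemma dims[simp]: "dim_row (diag_of n d) = n" "dim_col (diag_of n d) = n"
  "dim_row (inc_mat N es) = N" "dim_col (inc_mat N es) = length es"
  "dim_row (Gam es w) = length es" "dim_col (Gam es w) = length es"
  "dim_row (Minvsqrt N m) = N" "dim_col (Minvsqrt N m) = N"
  "dim_row (Msqrt N m) = N" "dim_col (Msqrt N m) = N"
  "dim_row (Mmat N m) = N" "dim_col (Mmat N m) = N"
  "dim_row (Minv N m) = N" "dim_col (Minv N m) = N"
  by (auto simp: diag_of_def inc_mat_def Gam_def Minvsqrt_def Msqrt_def Mmat_def Minv_def)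

lemma Gam_carrier[simp]: "Gam es w \<in> carrier_mat (length es) (length es)"
  unfolding Gam_def by simp
lemma Mis_carrier[simp]: "Minvsqrt N m \<in> carrier_mat N N"
  unfolding Minvsqrt_def by simp
lemma Ms_carrier[simp]: "Msqrt N m \<in> carrier_mat N N"
  unfolding Msqrt_def by simp
lemma M_carrier[simp]: "Mmat N m \<in> carrier_mat N N"
  unfolding Mmat_def by simp
lemma Minv_carrier[simp]: "Minv N m \<in> carrier_mat N N"
  unfolding Minv_def by simp
lemma LB_carrier[simp]: "LB N es w \<in> carrier_mat N N"
  unfolding LB_def by (auto intro!: mult_carrier_mat[of _ N "length es"])
lemma K_carrier[simp]: "Kmat N es w m \<in> carrier_mat N N"
  unfolding Kmat_def by (auto intro!: mult_carrier_mat[of _ N N])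
lemma edif_carrier[simp]: "edif N es m y \<in> carrier_vec (length es)"
  unfolding edif_def by (simp add: mv_carrier_iff)

lemma edif_eq: assumes g: "graph_ok N es" and y: "y \<in> carrier_vec N"
  shows "edif N es m y = vec (length es) (\<lambda>l. y $ fst (es!l) / sqrt (m (fst (es!l))) - y $ snd (es!l) / sqrt (m (snd (es!l))))"
proof -
  have a: "\<forall>l<length es. fst (es!l) < N \<and> snd (es!l) < N" using g unfolding graph_ok_def by auto
  have My: "Minvsqrt N m *\<^sub>v y \<in> carrier_vec N" by (simp add: mv_carrier_iff)
  have "edif N es m y = vec (length es) (\<lambda>l. (Minvsqrt N m *\<^sub>v y) $ fst (es!l) - (Minvsqrt N m *\<^sub>v y) $ snd (es!l))"
    unfolding edif_def by (rule incT_vec[OF g My])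
  also have "\<dots> = vec (length es) (\<lambda>l. y $ fst (es!l) / sqrt (m (fst (es!l))) - y $ snd (es!l) / sqrt (m (snd (es!l))))"
    by (rule eq_vecI) (simp_all add: a Minvsqrt_def diag_mult_vec[OF y])
  finally show ?thesis .
qed

lemma K_vec: assumes y: "y \<in> carrier_vec N"
  shows "Kmat N es w m *\<^sub>v y = Minvsqrt N m *\<^sub>v (inc_mat N es *\<^sub>v (Gam es w *\<^sub>v edif N es m y))"
proof -
  let ?A = "inc_mat N es" and ?G = "Gam es w" and ?M = "Minvsqrt N m"
  have AT: "transpose_mat ?A \<in> carrier_mat (length es) N" by simp
  have AG: "?A * ?G \<in> carrier_mat N (length es)" by (rule mult_carrier_mat) auto
  have MLB: "?M * LB N es w \<in> carrier_mat N N" by (rule mult_carrier_mat) auto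
  have My: "?M *\<^sub>v y \<in> carrier_vec N" using y by (simp add: mv_carrier_iff)
  have "Kmat N es w m *\<^sub>v y = (?M * LB N es w) *\<^sub>v (?M *\<^sub>v y)"
    unfolding Kmat_def by (rule assoc_mult_mat_vec[OF MLB _ y]) simp
  also have "\<dots> = ?M *\<^sub>v (LB N es w *\<^sub>v (?M *\<^sub>v y))"
    by (rule assoc_mult_mat_vec[OF _ _ My]) auto
  also have "LB N es w *\<^sub>v (?M *\<^sub>v y) = (?A * ?G) *\<^sub>v (transpose_mat ?A *\<^sub>v (?M *\<^sub>v y))"
    unfolding LB_def by (rule assoc_mult_mat_vec[OF AG AT My])
  also have "\<dots> = ?A *\<^sub>v (?G *\<^sub>v (transpose_mat ?A *\<^sub>v (?M *\<^sub>v y)))"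
    by (rule assoc_mult_mat_vec[of _ N "length es" _ "length es"]) (auto simp: My AT mv_carrier_iff)
  finally show ?thesis unfolding edif_def .
qed

lemma K_bil: assumes x: "x \<in> carrier_vec N" and y: "y \<in> carrier_vec N"
  shows "x \<bullet> (Kmat N es w m *\<^sub>v y) = (\<Sum>l<length es. w l * (edif N es m x $ l) * (edif N es m y $ l))"
proof -
  let ?A = "inc_mat N es" and ?G = "Gam es w" and ?M = "Minvsqrt N m"
  have g: "?G *\<^sub>v edif N es m y \<in> carrier_vec (length es)" by (simp add: mv_carrier_iff)
  have u: "?A *\<^sub>v (?G *\<^sub>v edif N es m y) \<in> carrier_vec N" by (simp add: mv_carrier_iff)
  have "(transpose_mat ?M *\<^sub>v x) \<bullet> (?A *\<^sub>v (?G *\<^sub>v edif N es m y)) = x \<bullet> (?M *\<^sub>v (?A *\<^sub>v (?G *\<^sub>v edif N es m y)))"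
    by (rule transpose_vec_mult_scalar[OF Mis_carrier u x])
  hence "x \<bullet> (Kmat N es w m *\<^sub>v y) = (?M *\<^sub>v x) \<bullet> (?A *\<^sub>v (?G *\<^sub>v edif N es m y))"
    unfolding K_vec[OF y] by (simp add: Minvsqrt_def)
  also have "\<dots> = edif N es m x \<bullet> (?G *\<^sub>v edif N es m y)"
    unfolding edif_def by (rule transpose_vec_mult_scalar[symmetric, OF inc_carrier _ _], insert x g, auto simp: edif_def mv_carrier_iff)
  also have "\<dots> = (\<Sum>l<length es. w l * (edif N es m x $ l) * (edif N es m y $ l))"
    unfolding Gam_def diag_mult_vec[OF edif_carrier] scalar_prod_def
    by (auto simp: lessThan_atLeast0 intro!: sum.cong)
  finally show ?thesis .
qed

lemma disc_le: fixes a b c :: real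
  assumes c: "0 \<le> c" and h: "\<forall>t. 0 \<le> a + 2*b*t + c*t^2"
  shows "b^2 \<le> a*c"
proof (cases "c = 0")
  case True
  have "b = 0"
  proof (rule ccontr)
    assume b: "b \<noteq> 0"
    have "0 \<le> a + 2*b*(-(a+1)/(2*b)) + c*(-(a+1)/(2*b))^2" using h by blast
    also have "\<dots> = -1" using b True by (simp add: field_simps)
    finally show False by simp
  qed
  then show ?thesis using True by simp
next
  case False
  with c have c: "c > 0" by simp
  have "0 \<le> a + 2*b*(-b/c) + c*(-b/c)^2" using h by blast
  also have "\<dots> = a - b^2/c" using c by (simp add: field_simps power2_eq_square)
  finally have "b^2/c \<le> a" by simp
  then show ?thesis using c by (simp add: pos_divide_le_eq)
qed

lemma CS_sum: fixes f g w :: "nat \<Rightarrow> real" assumes A: "finite A" and w: "\<forall>i\<in>A. 0 \<le> w i"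
  shows "(\<Sum>i\<in>A. w i * f i * g i)^2 \<le> (\<Sum>i\<in>A. w i * f i * f i) * (\<Sum>i\<in>A. w i * g i * g i)"
proof -
  have "\<forall>t. 0 \<le> (\<Sum>i\<in>A. w i*f i*f i) + 2*(\<Sum>i\<in>A. w i*f i*g i)*t + (\<Sum>i\<in>A. w i*g i*g i)*t^2"
  proof
    fix t :: real
    have "(\<Sum>i\<in>A. w i * (f i + t*g i)^2) = (\<Sum>i\<in>A. w i*f i*f i + 2*t*(w i*f i*g i) + t^2*(w i*g i*g i))"
      by (rule sum.cong) (simp_all add: algebra_simps power2_eq_square)
    also have "\<dots> = (\<Sum>i\<in>A. w i*f i*f i) + 2*(\<Sum>i\<in>A. w i*f i*g i)*t + (\<Sum>i\<in>A. w i*g i*g i)*t^2"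
      by (simp add: sum.distrib sum_distrib_left sum_distrib_right mult_ac)
    finally show "0 \<le> (\<Sum>i\<in>A. w i*f i*f i) + 2*(\<Sum>i\<in>A. w i*f i*g i)*t + (\<Sum>i\<in>A. w i*g i*g i)*t^2"
      using w by (metis (no_types, lifting) sum_nonneg mult_nonneg_nonneg zero_le_power2)
  qed
  moreover have "0 \<le> (\<Sum>i\<in>A. w i*g i*g i)" using w by (intro sum_nonneg) (simp add: mult.assoc)
  ultimately show ?thesis using disc_le by blast
qed

lemma self_dot_nonneg: "0 \<le> (x :: real vec) \<bullet> x"
  unfolding scalar_prod_def by (intro sum_nonneg) simp

lemma self_dot_pos: assumes x: "(x :: real vec) \<in> carrier_vec n" and nz: "x \<noteq> 0\<^sub>v n"
  shows "0 < x \<bullet> x"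
proof (rule ccontr)
  assume "\<not> 0 < x \<bullet> x"
  with self_dot_nonneg[of x] have "x \<bullet> x = 0" by simp
  hence "\<forall>i\<in>{0..<n}. x $ i * x $ i = 0" using x unfolding scalar_prod_def
    by (subst (asm) sum_nonneg_eq_0_iff) auto
  hence "x = 0\<^sub>v n" using x by (intro eq_vecI) auto
  with nz show False by simp
qed

lemma CS_vec: assumes x: "(x :: real vec) \<in> carrier_vec n" and y: "y \<in> carrier_vec n"
  shows "(x \<bullet> y)^2 \<le> (x \<bullet> x) * (y \<bullet> y)"
  using CS_sum[of "{0..<n}" "\<lambda>_. 1" "\<lambda>i. x $ i" "\<lambda>i. y $ i"] x y unfolding scalar_prod_def by simp

lemma two_dot_le: assumes x: "(x :: real vec) \<in> carrier_vec n" and y: "y \<in> carrier_vec n"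
  shows "2 * (x \<bullet> y) \<le> x \<bullet> x + y \<bullet> y"
proof -
  have cs: "(x \<bullet> y)^2 \<le> (x \<bullet> x) * (y \<bullet> y)" by (rule CS_vec[OF x y])
  have "(2 * (x \<bullet> y))^2 \<le> (x \<bullet> x + y \<bullet> y)^2"
  proof -
    have "(2 * (x \<bullet> y))^2 = 4 * (x \<bullet> y)^2" by (simp add: power2_eq_square)
    also have "\<dots> \<le> 4 * ((x \<bullet> x) * (y \<bullet> y))" using cs by simp
    also have "\<dots> \<le> (x \<bullet> x + y \<bullet> y)^2"
      using zero_le_power2[of "x \<bullet> x - y \<bullet> y"] by (simp add: power2_eq_square algebra_simps)
    finally show ?thesis .
  qed
  moreover have "0 \<le> x \<bullet> x + y \<bullet> y" using self_dot_nonneg[of x] self_dot_nonneg[of y] by simp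
  ultimately show ?thesis by (rule power2_le_imp_le)
qed

lemma mat_bound: fixes R :: "real mat" assumes R: "R \<in> carrier_mat n k"
  shows "\<exists>C>0. \<forall>x\<in>carrier_vec k. (R *\<^sub>v x) \<bullet> (R *\<^sub>v x) \<le> C * (x \<bullet> x)"
proof -
  define C where "C = 1 + (\<Sum>i<n. row R i \<bullet> row R i)"
  have C0: "C > 0" unfolding C_def using self_dot_nonneg by (smt (verit) sum_nonneg)
  have "(R *\<^sub>v x) \<bullet> (R *\<^sub>v x) \<le> C * (x \<bullet> x)" if x: "x \<in> carrier_vec k" for x
  proof -
    have "(R *\<^sub>v x) \<bullet> (R *\<^sub>v x) = (\<Sum>i<n. (row R i \<bullet> x)^2)"
      using R unfolding scalar_prod_def[of "R *\<^sub>v x"] by (simp add: power2_eq_square lessThan_atLeast0)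
    also have "\<dots> \<le> (\<Sum>i<n. (row R i \<bullet> row R i) * (x \<bullet> x))"
      by (rule sum_mono, rule CS_vec[of _ k]) (insert R x, auto)
    also have "\<dots> = (C - 1) * (x \<bullet> x)" unfolding C_def by (simp add: sum_distrib_right)
    also have "\<dots> \<le> C * (x \<bullet> x)" using self_dot_nonneg[of x] by (simp add: algebra_simps)
    finally show ?thesis .
  qed
  with C0 show ?thesis by blast
qed

lemma psd_cs: fixes R :: "real mat"
  assumes R: "R \<in> carrier_mat n n" and x: "x \<in> carrier_vec n" and y: "y \<in> carrier_vec n"
  and sym: "\<forall>u\<in>carrier_vec n. \<forall>v\<in>carrier_vec n. u \<bullet> (R *\<^sub>v v) = v \<bullet> (R *\<^sub>v u)"
  and psd: "\<forall>u\<in>carrier_vec n. 0 \<le> u \<bullet> (R *\<^sub>v u)"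
  shows "(y \<bullet> (R *\<^sub>v x))^2 \<le> (x \<bullet> (R *\<^sub>v x)) * (y \<bullet> (R *\<^sub>v y))"
proof -
  have "\<forall>t. 0 \<le> x \<bullet> (R *\<^sub>v x) + 2*(y \<bullet> (R *\<^sub>v x))*t + (y \<bullet> (R *\<^sub>v y))*t^2"
  proof
    fix t :: real
    have Ry: "R *\<^sub>v y \<in> carrier_vec n" "R *\<^sub>v x \<in> carrier_vec n" using R x y by auto
    have ty: "t \<cdot>\<^sub>v y \<in> carrier_vec n" using y by simp
    have "R *\<^sub>v (x + t \<cdot>\<^sub>v y) = R *\<^sub>v x + t \<cdot>\<^sub>v (R *\<^sub>v y)"
      using R x y by (simp add: mult_add_distrib_mat_vec[OF R x ty] mult_mat_vec[OF R y])
    hence "(x + t \<cdot>\<^sub>v y) \<bullet> (R *\<^sub>v (x + t \<cdot>\<^sub>v y)) = x \<bullet> (R *\<^sub>v x) + t*(x \<bullet> (R *\<^sub>v y)) + t*(y \<bullet> (R *\<^sub>v x)) + t*t*(y \<bullet> (R *\<^sub>v y))"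
      using x y Ry ty by (simp add: add_scalar_prod_distrib[of _ n] scalar_prod_add_distrib[of _ n] algebra_simps)
    also have "\<dots> = x \<bullet> (R *\<^sub>v x) + 2*(y \<bullet> (R *\<^sub>v x))*t + (y \<bullet> (R *\<^sub>v y))*t^2"
      using sym x y by (simp add: power2_eq_square algebra_simps)
    finally show "0 \<le> x \<bullet> (R *\<^sub>v x) + 2*(y \<bullet> (R *\<^sub>v x))*t + (y \<bullet> (R *\<^sub>v y))*t^2"
      using psd x ty by (metis add_carrier_vec)
  qed
  from disc_le[OF _ this] psd y show ?thesis by auto
qed

lemma inj_inverse: fixes R :: "real mat" assumes R: "R \<in> carrier_mat n n"
  and inj: "\<forall>x\<in>carrier_vec n. R *\<^sub>v x = 0\<^sub>v n \<longrightarrow> x = 0\<^sub>v n"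
  shows "\<exists>Q\<in>carrier_mat n n. Q * R = 1\<^sub>m n"
proof -
  have "det R \<noteq> 0" using det_0_iff_vec_prod_zero_field[OF R] inj by auto
  from det_non_zero_imp_unit[OF R this] have "R \<in> Units (ring_mat TYPE(real) n ())" .
  then show ?thesis unfolding Units_def ring_mat_def by auto
qed

lemma psd_near_zero_kernel: fixes R :: "real mat"
  assumes R: "R \<in> carrier_mat n n"
  and sym: "\<forall>u\<in>carrier_vec n. \<forall>v\<in>carrier_vec n. u \<bullet> (R *\<^sub>v v) = v \<bullet> (R *\<^sub>v u)"
  and psd: "\<forall>u\<in>carrier_vec n. 0 \<le> u \<bullet> (R *\<^sub>v u)"
  and near: "\<forall>e>0. \<exists>x\<in>carrier_vec n. x \<noteq> 0\<^sub>v n \<and> x \<bullet> (R *\<^sub>v x) < e * (x \<bullet> x)"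
  shows "\<exists>x\<in>carrier_vec n. x \<noteq> 0\<^sub>v n \<and> R *\<^sub>v x = 0\<^sub>v n"
proof (rule ccontr)
  assume "\<not> ?thesis"
  hence inj: "\<forall>x\<in>carrier_vec n. R *\<^sub>v x = 0\<^sub>v n \<longrightarrow> x = 0\<^sub>v n" by auto
  obtain Q where Q: "Q \<in> carrier_mat n n" "Q * R = 1\<^sub>m n" using inj_inverse[OF R inj] by blast
  obtain CQ where CQ: "CQ > 0" "\<forall>z\<in>carrier_vec n. (Q *\<^sub>v z) \<bullet> (Q *\<^sub>v z) \<le> CQ * (z \<bullet> z)"
    using mat_bound[OF Q(1)] by blast
  obtain CR where CR: "CR > 0" "\<forall>z\<in>carrier_vec n. (R *\<^sub>v z) \<bullet> (R *\<^sub>v z) \<le> CR * (z \<bullet> z)"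
    using mat_bound[OF R] by blast
  define D where "D = (1 + CR) / 2"
  have D: "D > 0" using CR unfolding D_def by simp
  have key: "x \<bullet> x \<le> CQ * D * (x \<bullet> (R *\<^sub>v x))" if x: "x \<in> carrier_vec n" for x
  proof -
    define z where "z = R *\<^sub>v x"
    have z: "z \<in> carrier_vec n" unfolding z_def using R x by simp
    have Rz: "R *\<^sub>v z \<in> carrier_vec n" using R z by simp
    have "x = (Q * R) *\<^sub>v x" using Q x by simp
    also have "\<dots> = Q *\<^sub>v z" unfolding z_def by (rule assoc_mult_mat_vec[OF Q(1) R x])
    finally have "x \<bullet> x \<le> CQ * (z \<bullet> z)" using CQ z by metis
    moreover have "z \<bullet> z \<le> D * (x \<bullet> (R *\<^sub>v x))"
    proof -
      have zRz: "z \<bullet> (R *\<^sub>v z) \<le> D * (z \<bullet> z)"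
      proof -
        have "2 * (z \<bullet> (R *\<^sub>v z)) \<le> z \<bullet> z + (R *\<^sub>v z) \<bullet> (R *\<^sub>v z)" by (rule two_dot_le[OF z Rz])
        also have "\<dots> \<le> z \<bullet> z + CR * (z \<bullet> z)" using CR z by auto
        finally show ?thesis unfolding D_def by (simp add: algebra_simps)
      qed
      have "(z \<bullet> z)^2 \<le> (x \<bullet> (R *\<^sub>v x)) * (z \<bullet> (R *\<^sub>v z))"
        using psd_cs[OF R x z sym psd] unfolding z_def by simp
      also have "\<dots> \<le> (x \<bullet> (R *\<^sub>v x)) * (D * (z \<bullet> z))"
        using zRz psd x by (intro mult_left_mono) auto
      finally have h: "(z \<bullet> z) * (z \<bullet> z) \<le> (D * (x \<bullet> (R *\<^sub>v x))) * (z \<bullet> z)"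
        by (simp add: power2_eq_square algebra_simps)
      show ?thesis
      proof (cases "z \<bullet> z = 0")
        case True then show ?thesis using psd x D by simp
      next
        case False
        with self_dot_nonneg[of z] have "z \<bullet> z > 0" by simp
        with h show ?thesis by simp
      qed
    qed
    ultimately show ?thesis using CQ by (smt (verit) mult_left_mono mult.assoc)
  qed
  define e where "e = 1 / (2 * CQ * D)"
  have e: "e > 0" unfolding e_def using CQ D by simp
  from near e obtain x where x: "x \<in> carrier_vec n" "x \<noteq> 0\<^sub>v n" "x \<bullet> (R *\<^sub>v x) < e * (x \<bullet> x)" by blast
  have xx: "x \<bullet> x > 0" using self_dot_pos[OF x(1,2)] .
  have "x \<bullet> x \<le> CQ * D * (x \<bullet> (R *\<^sub>v x))" using key[OF x(1)] .
  also have "\<dots> < CQ * D * (e * (x \<bullet> x))" using x(3) CQ D by simp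
  also have "\<dots> = (x \<bullet> x) / 2" unfolding e_def using CQ D by simp
  finally show False using xx by simp
qed

definition Rmat :: "nat \<Rightarrow> real \<Rightarrow> real mat \<Rightarrow> real \<Rightarrow> real \<Rightarrow> real vec \<Rightarrow> real mat" where
  "Rmat n a K c s v = mat n n (\<lambda>(i,j). a * K $$ (i,j) + (if i = j then c else 0) + s * (v $ i * v $ j))"

lemma Rmat_carrier[simp]: "Rmat n a K c s v \<in> carrier_mat n n"
  unfolding Rmat_def by simp

lemma Rmat_dims[simp]: "dim_row (Rmat n a K c s v) = n" "dim_col (Rmat n a K c s v) = n"
  unfolding Rmat_def by simp_all

lemma Rmat_vec_idx: assumes K: "K \<in> carrier_mat n n" and v: "v \<in> carrier_vec n" and x: "x \<in> carrier_vec n"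
  and i: "i < n"
  shows "(Rmat n a K c s v *\<^sub>v x) $ i = a * (K *\<^sub>v x) $ i + c * x $ i + s * (v \<bullet> x) * v $ i"
proof -
  have "(Rmat n a K c s v *\<^sub>v x) $ i = (\<Sum>j\<in>{0..<n}. (a * K $$ (i,j) + (if i = j then c else 0) + s * (v $ i * v $ j)) * x $ j)"
    using i x unfolding Rmat_def by (simp add: row_def scalar_prod_def)
  also have "\<dots> = (\<Sum>j\<in>{0..<n}. a * (K $$ (i,j) * x $ j)) + (\<Sum>j\<in>{0..<n}. if j = i then c * x $ i else 0) + (\<Sum>j\<in>{0..<n}. s * v $ i * (v $ j * x $ j))"
    unfolding sum.distrib[symmetric] by (rule sum.cong) (auto simp: algebra_simps)
  also have "\<dots> = a * (K *\<^sub>v x) $ i + c * x $ i + s * (v \<bullet> x) * v $ i"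
    using i K x v by (simp add: sum_distrib_left[symmetric] row_def scalar_prod_def)
  finally show ?thesis .
qed

lemma Rmat_dot: assumes K: "K \<in> carrier_mat n n" and v: "v \<in> carrier_vec n" and x: "x \<in> carrier_vec n"
  and y: "y \<in> carrier_vec n"
  shows "y \<bullet> (Rmat n a K c s v *\<^sub>v x) = a * (y \<bullet> (K *\<^sub>v x)) + c * (y \<bullet> x) + s * (v \<bullet> x) * (y \<bullet> v)"
proof -
  have "y \<bullet> (Rmat n a K c s v *\<^sub>v x) = (\<Sum>i\<in>{0..<n}. y $ i * (a * (K *\<^sub>v x) $ i + c * x $ i + s * (v \<bullet> x) * v $ i))"
    unfolding scalar_prod_def[of y] dim_mult_mat_vec Rmat_dims
    by (rule sum.cong) (auto simp del: index_mult_mat_vec simp add: Rmat_vec_idx[OF K v x])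
  also have "\<dots> = a * (\<Sum>i\<in>{0..<n}. y $ i * (K *\<^sub>v x) $ i) + c * (\<Sum>i\<in>{0..<n}. y $ i * x $ i) + s * (v \<bullet> x) * (\<Sum>i\<in>{0..<n}. y $ i * v $ i)"
    by (simp add: sum.distrib sum_distrib_left algebra_simps)
  also have "\<dots> = a * (y \<bullet> (K *\<^sub>v x)) + c * (y \<bullet> x) + s * (v \<bullet> x) * (y \<bullet> v)"
    using K x v unfolding scalar_prod_def[of y] by simp
  finally show ?thesis .
qed

lemma ratio_bound: fixes K :: "real mat" assumes K: "K \<in> carrier_mat n n"
  shows "\<exists>B. \<forall>x\<in>carrier_vec n. x \<bullet> (K *\<^sub>v x) \<le> B * (x \<bullet> x)"
proof -
  obtain C where C: "C > 0" "\<forall>z\<in>carrier_vec n. (K *\<^sub>v z) \<bullet> (K *\<^sub>v z) \<le> C * (z \<bullet> z)"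
    using mat_bound[OF K] by blast
  have "x \<bullet> (K *\<^sub>v x) \<le> ((1 + C)/2) * (x \<bullet> x)" if x: "x \<in> carrier_vec n" for x
  proof -
    have "2 * (x \<bullet> (K *\<^sub>v x)) \<le> x \<bullet> x + (K *\<^sub>v x) \<bullet> (K *\<^sub>v x)" by (rule two_dot_le[of _ n]) (use x K in auto)
    also have "\<dots> \<le> x \<bullet> x + C * (x \<bullet> x)" using C x by auto
    finally show ?thesis by (simp add: algebra_simps)
  qed
  then show ?thesis by blast
qed

lemma unit0: assumes "0 < n" shows "unit_vec n 0 \<in> carrier_vec n" "unit_vec n 0 \<noteq> (0\<^sub>v n :: real vec)"
proof -
  show "unit_vec n 0 \<in> carrier_vec n" by simp
  have "unit_vec n 0 $ 0 = (1::real)" using assms by simp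
  moreover have "(0\<^sub>v n :: real vec) $ 0 = 0" using assms by simp
  ultimately show "unit_vec n 0 \<noteq> (0\<^sub>v n :: real vec)" by auto
qed

lemma top_eig: fixes K :: "real mat"
  assumes K: "K \<in> carrier_mat n n" and n: "0 < n"
  and sym: "\<forall>u\<in>carrier_vec n. \<forall>v\<in>carrier_vec n. u \<bullet> (K *\<^sub>v v) = v \<bullet> (K *\<^sub>v u)"
  shows "\<exists>\<mu>. (\<exists>x\<in>carrier_vec n. x \<noteq> 0\<^sub>v n \<and> K *\<^sub>v x = \<mu> \<cdot>\<^sub>v x) \<and> (\<forall>x\<in>carrier_vec n. x \<bullet> (K *\<^sub>v x) \<le> \<mu> * (x \<bullet> x))"
proof -
  define S where "S = {x \<bullet> (K *\<^sub>v x) / (x \<bullet> x) | x. x \<in> carrier_vec n \<and> x \<noteq> 0\<^sub>v n}"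
  obtain B where B: "\<forall>x\<in>carrier_vec n. x \<bullet> (K *\<^sub>v x) \<le> B * (x \<bullet> x)" using ratio_bound[OF K] by blast
  have ne: "S \<noteq> {}" unfolding S_def using unit0[OF n] by blast
  have bdd: "bdd_above S" unfolding S_def bdd_above_def
  proof (intro exI[of _ B] allI impI ballI)
    fix s assume "s \<in> {x \<bullet> (K *\<^sub>v x) / (x \<bullet> x) | x. x \<in> carrier_vec n \<and> x \<noteq> 0\<^sub>v n}"
    then obtain x where x: "x \<in> carrier_vec n" "x \<noteq> 0\<^sub>v n" and s: "s = x \<bullet> (K *\<^sub>v x) / (x \<bullet> x)" by blast
    have "0 < x \<bullet> x" by (rule self_dot_pos[OF x])
    then show "s \<le> B" unfolding s using B x by (simp add: pos_divide_le_eq)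
  qed
  define \<mu> where "\<mu> = Sup S"
  have up: "x \<bullet> (K *\<^sub>v x) \<le> \<mu> * (x \<bullet> x)" if x: "x \<in> carrier_vec n" for x
  proof (cases "x = 0\<^sub>v n")
    case True then show ?thesis using K by simp
  next
    case False
    have "x \<bullet> (K *\<^sub>v x) / (x \<bullet> x) \<in> S" unfolding S_def using x False by blast
    hence "x \<bullet> (K *\<^sub>v x) / (x \<bullet> x) \<le> \<mu>" unfolding \<mu>_def using bdd by (rule cSup_upper)
    moreover have "0 < x \<bullet> x" by (rule self_dot_pos[OF x False])
    ultimately show ?thesis by (simp add: pos_divide_le_eq)
  qed
  define R where "R = Rmat n (-1) K \<mu> 0 (0\<^sub>v n)"
  have R: "R \<in> carrier_mat n n" unfolding R_def by simp
  have z: "(0\<^sub>v n :: real vec) \<in> carrier_vec n" by simp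
  have Rdot: "y \<bullet> (R *\<^sub>v x) = - (y \<bullet> (K *\<^sub>v x)) + \<mu> * (y \<bullet> x)" if "x \<in> carrier_vec n" "y \<in> carrier_vec n" for x y
    unfolding R_def using Rmat_dot[OF K z that] by simp
  have symR: "\<forall>u\<in>carrier_vec n. \<forall>v\<in>carrier_vec n. u \<bullet> (R *\<^sub>v v) = v \<bullet> (R *\<^sub>v u)"
    using sym by (auto simp: Rdot comm_scalar_prod[of _ n])
  have psdR: "\<forall>u\<in>carrier_vec n. 0 \<le> u \<bullet> (R *\<^sub>v u)" using up by (auto simp: Rdot)
  have near: "\<forall>e>0. \<exists>x\<in>carrier_vec n. x \<noteq> 0\<^sub>v n \<and> x \<bullet> (R *\<^sub>v x) < e * (x \<bullet> x)"
  proof (intro allI impI)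
    fix e :: real assume e: "e > 0"
    have "\<mu> - e < Sup S" unfolding \<mu>_def using e by simp
    then obtain s where "s \<in> S" "\<mu> - e < s" using less_cSup_iff[OF ne bdd] by blast
    then obtain x where x: "x \<in> carrier_vec n" "x \<noteq> 0\<^sub>v n" and lt: "\<mu> - e < x \<bullet> (K *\<^sub>v x) / (x \<bullet> x)"
      unfolding S_def by blast
    have "0 < x \<bullet> x" by (rule self_dot_pos[OF x])
    with lt have "(\<mu> - e) * (x \<bullet> x) < x \<bullet> (K *\<^sub>v x)" by (simp add: pos_less_divide_eq)
    hence "x \<bullet> (R *\<^sub>v x) < e * (x \<bullet> x)" using x by (simp add: Rdot algebra_simps)
    with x show "\<exists>x\<in>carrier_vec n. x \<noteq> 0\<^sub>v n \<and> x \<bullet> (R *\<^sub>v x) < e * (x \<bullet> x)" by blast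
  qed
  obtain x where x: "x \<in> carrier_vec n" "x \<noteq> 0\<^sub>v n" "R *\<^sub>v x = 0\<^sub>v n"
    using psd_near_zero_kernel[OF R symR psdR near] by blast
  have "K *\<^sub>v x = \<mu> \<cdot>\<^sub>v x"
  proof (rule eq_vecI)
    fix i assume "i < dim_vec (\<mu> \<cdot>\<^sub>v x)"
    hence i: "i < n" using x by simp
    have "(R *\<^sub>v x) $ i = 0" using x(3) i by simp
    moreover have "(R *\<^sub>v x) $ i = - (K *\<^sub>v x) $ i + \<mu> * x $ i"
      unfolding R_def using Rmat_vec_idx[OF K z x(1) i] by simp
    ultimately show "(K *\<^sub>v x) $ i = (\<mu> \<cdot>\<^sub>v x) $ i" using i x by simp
  qed (use K x in simp)
  with x up show ?thesis by blast
qed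

lemma low_eig: fixes K :: "real mat"
  assumes K: "K \<in> carrier_mat n n"
  and sym: "\<forall>u\<in>carrier_vec n. \<forall>v\<in>carrier_vec n. u \<bullet> (K *\<^sub>v v) = v \<bullet> (K *\<^sub>v u)"
  and psd: "\<forall>u\<in>carrier_vec n. 0 \<le> u \<bullet> (K *\<^sub>v u)"
  and v: "v \<in> carrier_vec n" "v \<noteq> 0\<^sub>v n" and Kv: "K *\<^sub>v v = 0\<^sub>v n"
  and ex: "\<exists>y\<in>carrier_vec n. y \<noteq> 0\<^sub>v n \<and> v \<bullet> y = 0"
  shows "\<exists>\<nu>. (\<exists>x\<in>carrier_vec n. x \<noteq> 0\<^sub>v n \<and> v \<bullet> x = 0 \<and> K *\<^sub>v x = \<nu> \<cdot>\<^sub>v x) \<and>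
     (\<forall>y\<in>carrier_vec n. v \<bullet> y = 0 \<longrightarrow> \<nu> * (y \<bullet> y) \<le> y \<bullet> (K *\<^sub>v y))"
proof -
  define S where "S = {x \<bullet> (K *\<^sub>v x) / (x \<bullet> x) | x. x \<in> carrier_vec n \<and> x \<noteq> 0\<^sub>v n \<and> v \<bullet> x = 0}"
  have ne: "S \<noteq> {}" unfolding S_def using ex by blast
  have bdd: "bdd_below S" unfolding S_def bdd_below_def
  proof (intro exI[of _ 0] allI impI ballI)
    fix s assume "s \<in> {x \<bullet> (K *\<^sub>v x) / (x \<bullet> x) | x. x \<in> carrier_vec n \<and> x \<noteq> 0\<^sub>v n \<and> v \<bullet> x = 0}"
    then obtain x where x: "x \<in> carrier_vec n" and s: "s = x \<bullet> (K *\<^sub>v x) / (x \<bullet> x)" by blast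
    show "0 \<le> s" unfolding s using psd x self_dot_nonneg[of x] by simp
  qed
  define \<nu> where "\<nu> = Inf S"
  have low: "\<nu> * (x \<bullet> x) \<le> x \<bullet> (K *\<^sub>v x)" if x: "x \<in> carrier_vec n" "v \<bullet> x = 0" for x
  proof (cases "x = 0\<^sub>v n")
    case True then show ?thesis using K by simp
  next
    case False
    have "x \<bullet> (K *\<^sub>v x) / (x \<bullet> x) \<in> S" unfolding S_def using x False by blast
    hence "\<nu> \<le> x \<bullet> (K *\<^sub>v x) / (x \<bullet> x)" unfolding \<nu>_def using bdd by (rule cInf_lower)
    moreover have "0 < x \<bullet> x" by (rule self_dot_pos[OF x(1) False])
    ultimately show ?thesis by (simp add: pos_le_divide_eq)
  qed
  have vv: "0 < v \<bullet> v" by (rule self_dot_pos[OF v])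
  define s where "s = (\<nu> + 1) / (v \<bullet> v)"
  define R where "R = Rmat n 1 K (-\<nu>) s v"
  have R: "R \<in> carrier_mat n n" unfolding R_def by simp
  have Rdot: "y \<bullet> (R *\<^sub>v x) = y \<bullet> (K *\<^sub>v x) - \<nu> * (y \<bullet> x) + s * (v \<bullet> x) * (y \<bullet> v)" if "x \<in> carrier_vec n" "y \<in> carrier_vec n" for x y
    unfolding R_def using Rmat_dot[OF K v(1) that] by simp
  have symR: "\<forall>a\<in>carrier_vec n. \<forall>b\<in>carrier_vec n. a \<bullet> (R *\<^sub>v b) = b \<bullet> (R *\<^sub>v a)"
    using sym v by (auto simp: Rdot comm_scalar_prod[of _ n])
  have vK: "v \<bullet> (K *\<^sub>v x) = 0" if "x \<in> carrier_vec n" for x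
    using sym that v Kv by (metis scalar_prod_right_zero)
  have psdR: "\<forall>x\<in>carrier_vec n. 0 \<le> x \<bullet> (R *\<^sub>v x)"
  proof
    fix x :: "real vec" assume x: "x \<in> carrier_vec n"
    define a where "a = (v \<bullet> x) / (v \<bullet> v)"
    define y where "y = x - a \<cdot>\<^sub>v v"
    have y: "y \<in> carrier_vec n" unfolding y_def using x v by simp
    have vy: "v \<bullet> y = 0" unfolding y_def a_def using x v vv
      by (simp add: scalar_prod_minus_distrib[of _ n] )
    have "K *\<^sub>v y = K *\<^sub>v x - a \<cdot>\<^sub>v (K *\<^sub>v v)" unfolding y_def using K x v
      by (simp add: mult_minus_distrib_mat_vec[of K n n] mult_mat_vec[of K n n])
    also have "\<dots> = K *\<^sub>v x" unfolding Kv by (rule eq_vecI) (use K x in auto)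
    finally have Ky: "K *\<^sub>v y = K *\<^sub>v x" .
    have "y \<bullet> (K *\<^sub>v y) = x \<bullet> (K *\<^sub>v x) - a * (v \<bullet> (K *\<^sub>v x))"
      unfolding Ky unfolding y_def using K x v by (simp add: minus_scalar_prod_distrib[of _ n])
    hence yKy: "y \<bullet> (K *\<^sub>v y) = x \<bullet> (K *\<^sub>v x)" using vK[OF x] by simp
    have "y \<bullet> y = x \<bullet> x - 2 * a * (v \<bullet> x) + a * a * (v \<bullet> v)"
      unfolding y_def using x v
      by (simp add: minus_scalar_prod_distrib[of _ n] scalar_prod_minus_distrib[of _ n] comm_scalar_prod[of v n x] algebra_simps)
    hence yy: "y \<bullet> y = x \<bullet> x - (v \<bullet> x)^2 / (v \<bullet> v)" unfolding a_def using vv by (simp add: field_simps power2_eq_square)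
    have "x \<bullet> (R *\<^sub>v x) = x \<bullet> (K *\<^sub>v x) - \<nu> * (x \<bullet> x) + s * (v \<bullet> x)^2"
      using Rdot[OF x x] comm_scalar_prod[of v n x] x v by (simp add: power2_eq_square)
    also have "\<dots> = (y \<bullet> (K *\<^sub>v y) - \<nu> * (y \<bullet> y)) + (v \<bullet> x)^2 / (v \<bullet> v)"
      unfolding yKy yy s_def using vv by (simp add: field_simps)
    also have "\<dots> \<ge> 0" using low[OF y vy] vv by simp
    finally show "0 \<le> x \<bullet> (R *\<^sub>v x)" .
  qed
  have near: "\<forall>e>0. \<exists>x\<in>carrier_vec n. x \<noteq> 0\<^sub>v n \<and> x \<bullet> (R *\<^sub>v x) < e * (x \<bullet> x)"
  proof (intro allI impI)
    fix e :: real assume e: "e > 0"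
    have "Inf S < \<nu> + e" unfolding \<nu>_def using e by simp
    then obtain t where "t \<in> S" "t < \<nu> + e" using cInf_less_iff[OF ne bdd] by blast
    then obtain x where x: "x \<in> carrier_vec n" "x \<noteq> 0\<^sub>v n" "v \<bullet> x = 0" and lt: "x \<bullet> (K *\<^sub>v x) / (x \<bullet> x) < \<nu> + e"
      unfolding S_def by blast
    have "0 < x \<bullet> x" by (rule self_dot_pos[OF x(1,2)])
    with lt have "x \<bullet> (K *\<^sub>v x) < (\<nu> + e) * (x \<bullet> x)" by (simp add: pos_divide_less_eq)
    hence "x \<bullet> (R *\<^sub>v x) < e * (x \<bullet> x)" using x by (simp add: Rdot algebra_simps)
    with x show "\<exists>x\<in>carrier_vec n. x \<noteq> 0\<^sub>v n \<and> x \<bullet> (R *\<^sub>v x) < e * (x \<bullet> x)" by blast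
  qed
  obtain x where x: "x \<in> carrier_vec n" "x \<noteq> 0\<^sub>v n" "R *\<^sub>v x = 0\<^sub>v n"
    using psd_near_zero_kernel[OF R symR psdR near] by blast
  have "v \<bullet> (R *\<^sub>v x) = 0" using x v by simp
  hence "0 = - \<nu> * (v \<bullet> x) + s * (v \<bullet> x) * (v \<bullet> v)" using Rdot[OF x(1) v(1)] vK[OF x(1)] by simp
  also have "\<dots> = v \<bullet> x" unfolding s_def using vv by (simp add: field_simps)
  finally have vx: "v \<bullet> x = 0" by simp
  have "K *\<^sub>v x = \<nu> \<cdot>\<^sub>v x"
  proof (rule eq_vecI)
    fix i assume "i < dim_vec (\<nu> \<cdot>\<^sub>v x)"
    hence i: "i < n" using x by simp
    have "(R *\<^sub>v x) $ i = 0" using x(3) i by simp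
    moreover have "(R *\<^sub>v x) $ i = (K *\<^sub>v x) $ i - \<nu> * x $ i"
      unfolding R_def using Rmat_vec_idx[OF K v(1) x(1) i] vx by simp
    ultimately show "(K *\<^sub>v x) $ i = (\<nu> \<cdot>\<^sub>v x) $ i" using i x by simp
  qed (use K x in simp)
  with x vx low show ?thesis by blast
qed

lemma eig_real: fixes K :: "real mat" and u :: "complex vec"
  assumes K: "K \<in> carrier_mat n n" and sym: "\<forall>i<n. \<forall>j<n. K $$ (i,j) = K $$ (j,i)"
  and u: "u \<in> carrier_vec n" "u \<noteq> 0\<^sub>v n" and eig: "map_mat complex_of_real K *\<^sub>v u = a \<cdot>\<^sub>v u"
  shows "cnj a = a"
proof -
  define T where "T = (\<Sum>i<n. cnj (u $ i) * (\<Sum>j<n. complex_of_real (K $$ (i,j)) * u $ j))"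
  define P where "P = (\<Sum>i<n. cnj (u $ i) * u $ i)"
  have row: "(\<Sum>j<n. complex_of_real (K $$ (i,j)) * u $ j) = a * u $ i" if i: "i < n" for i
  proof -
    have "(map_mat complex_of_real K *\<^sub>v u) $ i = (a \<cdot>\<^sub>v u) $ i" using eig by simp
    then show ?thesis using i K u by (simp add: scalar_prod_def row_def lessThan_atLeast0)
  qed
  have "T = (\<Sum>i<n. cnj (u $ i) * (a * u $ i))" unfolding T_def
    by (rule sum.cong) (simp_all add: row)
  also have "\<dots> = a * P" unfolding P_def by (simp add: sum_distrib_left algebra_simps)
  finally have TP: "T = a * P" .
  have "cnj T = (\<Sum>i<n. u $ i * (\<Sum>j<n. complex_of_real (K $$ (i,j)) * cnj (u $ j)))"
    unfolding T_def by (simp add: cnj_sum)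
  also have "\<dots> = (\<Sum>i<n. \<Sum>j<n. u $ i * complex_of_real (K $$ (i,j)) * cnj (u $ j))"
    by (simp add: sum_distrib_left mult.assoc)
  also have "\<dots> = (\<Sum>j<n. \<Sum>i<n. u $ i * complex_of_real (K $$ (i,j)) * cnj (u $ j))"
    by (rule sum.swap)
  also have "\<dots> = (\<Sum>j<n. \<Sum>i<n. cnj (u $ j) * (complex_of_real (K $$ (j,i)) * u $ i))"
    using sym by (intro sum.cong refl) (simp add: algebra_simps)
  also have "\<dots> = T" unfolding T_def by (simp add: sum_distrib_left)
  finally have cT: "cnj T = T" .
  have Pr: "P = complex_of_real (\<Sum>i<n. (cmod (u $ i))^2)"
    unfolding P_def of_real_sum by (intro sum.cong refl) (metis complex_norm_square mult.commute)
  obtain i where i: "i < n" "u $ i \<noteq> 0"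
  proof -
    have "\<not> (\<forall>i<n. u $ i = 0)"
    proof
      assume "\<forall>i<n. u $ i = 0"
      hence "u = 0\<^sub>v n" using u(1) by (intro eq_vecI) auto
      with u(2) show False by simp
    qed
    then show ?thesis using that by blast
  qed
  have "0 < (\<Sum>i<n. (cmod (u $ i))^2)"
  proof -
    have "(cmod (u $ i))^2 \<le> (\<Sum>i<n. (cmod (u $ i))^2)"
      using i by (intro member_le_sum) auto
    moreover have "0 < (cmod (u $ i))^2" using i by simp
    ultimately show ?thesis by linarith
  qed
  hence P0: "P \<noteq> 0" "cnj P = P" unfolding Pr by (simp_all del: of_real_sum of_real_power)
  have "cnj a * P = a * P" using cT TP P0 by (metis complex_cnj_mult)
  with P0 show ?thesis by simp
qed

lemma map_of_real_mult: "map_poly complex_of_real (p * q) = map_poly of_real p * map_poly of_real q"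
proof -
  interpret rp: map_poly_comm_ring_hom "complex_of_real" ..
  show ?thesis by (rule rp.hom_mult)
qed

lemma char_split: fixes K :: "real mat"
  assumes K: "K \<in> carrier_mat n n" and sym: "\<forall>i<n. \<forall>j<n. K $$ (i,j) = K $$ (j,i)"
  shows "\<exists>rs. char_poly K = (\<Prod>r\<leftarrow>rs. [:- r, 1:]) \<and> length rs = n"
proof -
  define Kc where "Kc = map_mat complex_of_real K"
  have Kc: "Kc \<in> carrier_mat n n" unfolding Kc_def using K by simp
  obtain as where as: "char_poly Kc = (\<Prod>a\<leftarrow>as. [:- a, 1:])" "length as = n"
    using char_poly_factorized[OF Kc] by blast
  have real: "complex_of_real (Re a) = a" if a: "a \<in> set as" for a
  proof -
    have "poly (char_poly Kc) a = 0" unfolding as(1) using a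
      by (simp add: poly_prod_list prod_list_zero_iff)
    hence "eigenvalue Kc a" using eigenvalue_root_char_poly[OF Kc] by simp
    then obtain u where "eigenvector Kc u a" unfolding eigenvalue_def by blast
    hence u: "u \<in> carrier_vec n" "u \<noteq> 0\<^sub>v n" "Kc *\<^sub>v u = a \<cdot>\<^sub>v u"
      unfolding eigenvector_def using Kc by auto
    have "cnj a = a" by (rule eig_real[OF K sym u(1,2) u(3)[unfolded Kc_def]])
    then show ?thesis by (metis Reals_cnj_iff complex_is_Real_iff of_real_Re)
  qed
  define rs where "rs = map Re as"
  have "map_poly complex_of_real (\<Prod>r\<leftarrow>rs. [:- r, 1:]) = (\<Prod>r\<leftarrow>rs. [:- complex_of_real r, 1:])"
  proof (induction rs)
    case (Cons r rs)
    have "map_poly complex_of_real (\<Prod>r\<leftarrow>r # rs. [:- r, 1:]) = map_poly complex_of_real [:- r, 1:] * map_poly complex_of_real (\<Prod>r\<leftarrow>rs. [:- r, 1:])"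
      by (simp only: list.map prod_list.Cons map_of_real_mult)
    also have "map_poly complex_of_real [:- r, 1:] = [:- complex_of_real r, 1:]" by simp
    finally show ?case using Cons by simp
  qed simp
  also have "\<dots> = (\<Prod>a\<leftarrow>as. [:- a, 1:])" unfolding rs_def using real
    by (induction as) auto
  also have "\<dots> = map_poly complex_of_real (char_poly K)"
    unfolding as(1)[symmetric] Kc_def by (rule of_real_hom.char_poly_hom[OF K])
  finally have eq: "map_poly complex_of_real (\<Prod>r\<leftarrow>rs. [:- r, 1:]) = map_poly complex_of_real (char_poly K)" .
  have "char_poly K = (\<Prod>r\<leftarrow>rs. [:- r, 1:])"
  proof (rule poly_eqI)
    fix i
    have "coeff (map_poly complex_of_real (\<Prod>r\<leftarrow>rs. [:- r, 1:])) i = coeff (map_poly complex_of_real (char_poly K)) i"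
      using eq by simp
    then show "coeff (char_poly K) i = coeff (\<Prod>r\<leftarrow>rs. [:- r, 1:]) i"
      by (simp add: coeff_map_poly)
  qed
  moreover have "length rs = n" unfolding rs_def using as(2) by simp
  ultimately show ?thesis by blast
qed

lemma cos_ge_sin_rho: fixes t \<rho> :: real
  assumes r: "0 < \<rho>" "\<rho> < pi/2" and t: "\<bar>t\<bar> \<le> pi/2 - \<rho>"
  shows "sin \<rho> \<le> cos t"
proof -
  have "cos (pi/2 - \<rho>) \<le> cos \<bar>t\<bar>" using r t by (intro cos_monotone_0_pi_le) auto
  then show ?thesis by (simp add: cos_diff)
qed

lemma breg_bounds: fixes a b \<rho> :: real
  assumes r: "0 < \<rho>" "\<rho> < pi/2" and a: "\<bar>a\<bar> < pi/2 - \<rho>" and b: "\<bar>b\<bar> < pi/2 - \<rho>"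
  shows "sin \<rho> / 2 * (a - b)^2 \<le> cos b - cos a - sin b * (a - b) \<and> cos b - cos a - sin b * (a - b) \<le> (a - b)^2 / 2"
proof (cases "a = b")
  case True then show ?thesis by simp
next
  case False
  define diff where "diff = (\<lambda>(m::nat) t::real. if m = 0 then - cos t else if m = 1 then sin t else cos t)"
  define L where "L = pi/2 - \<rho>"
  have der: "\<forall>m t. m < 2 \<and> - L \<le> t \<and> t \<le> L \<longrightarrow> DERIV (diff m) t :> diff (Suc m) t"
  proof (intro allI impI)
    fix m :: nat and t :: real assume "m < 2 \<and> - L \<le> t \<and> t \<le> L"
    hence "m = 0 \<or> m = 1" by auto
    then show "DERIV (diff m) t :> diff (Suc m) t"
    proof
      assume "m = 0" then show ?thesis unfolding diff_def
        by (auto intro!: derivative_eq_intros)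
    next
      assume "m = 1" then show ?thesis unfolding diff_def
        by (auto intro!: derivative_eq_intros)
    qed
  qed
  have d0: "diff 0 = (\<lambda>t. - cos t)" unfolding diff_def by simp
  have ints: "-L \<le> b" "b \<le> L" "-L \<le> a" "a \<le> L" using a b unfolding L_def by auto
  have "\<exists>t. (if a < b then a < t \<and> t < b else b < t \<and> t < a) \<and>
    - cos a = (\<Sum>m<2. (diff m b / fact m) * (a - b)^m) + (diff 2 t / fact 2) * (a - b)^2"
    by (rule Taylor[of 2 diff "\<lambda>t. - cos t" "-L" L b a, OF _ d0 der]) (use ints False in auto)
  then obtain t where t: "(if a < b then a < t \<and> t < b else b < t \<and> t < a)"
    and eq: "- cos a = (\<Sum>m<2. (diff m b / fact m) * (a - b)^m) + (diff 2 t / fact 2) * (a - b)^2"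
    by blast
  have eq2: "cos b - cos a - sin b * (a - b) = cos t / 2 * (a - b)^2"
    using eq unfolding diff_def by (simp add: numeral_2_eq_2 fact_numeral)
  have tb: "\<bar>t\<bar> \<le> pi/2 - \<rho>" using t a b by (auto split: if_splits)
  have "sin \<rho> \<le> cos t" by (rule cos_ge_sin_rho[OF r tb])
  moreover have "cos t \<le> 1" by simp
  ultimately have "sin \<rho> * (a - b)^2 \<le> cos t * (a - b)^2" "cos t * (a - b)^2 \<le> 1 * (a - b)^2"
    by (auto intro!: mult_right_mono simp del: mult_1)
  then show ?thesis unfolding eq2 by auto
qed

lemma sin_diff_sq: fixes a b :: real shows "(sin a - sin b)^2 \<le> (a - b)^2"
proof -
  have "\<bar>sin a - sin b\<bar> = 2 * \<bar>sin ((a - b) / 2)\<bar> * \<bar>cos ((a + b) / 2)\<bar>"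
    by (simp add: sin_diff_sin abs_mult)
  also have "\<dots> \<le> 2 * \<bar>(a - b) / 2\<bar> * 1"
    by (intro mult_mono abs_sin_x_le_abs_x) auto
  also have "\<dots> = \<bar>a - b\<bar>" by simp
  finally show ?thesis by (metis abs_ge_zero power2_abs power_mono)
qed

lemma conn_const:
  assumes conn: "connected_graph N es"
  and z: "\<forall>l<length es. z (fst (es!l)) = (z (snd (es!l)) :: real)"
  and i: "i < N" and j: "j < N"
  shows "z i = z j"
proof -
  have step: "z p = z q" if "adjacent es p q" for p q
  proof -
    from that have "(p, q) \<in> set es \<or> (q, p) \<in> set es" unfolding adjacent_def .
    then show ?thesis
    proof
      assume "(p, q) \<in> set es"
      then obtain l where "l < length es" "es ! l = (p, q)" by (auto simp: in_set_conv_nth)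
      then show ?thesis using z by force
    next
      assume "(q, p) \<in> set es"
      then obtain l where "l < length es" "es ! l = (q, p)" by (auto simp: in_set_conv_nth)
      then show ?thesis using z by force
    qed
  qed
  have "(adjacent es)\<^sup>*\<^sup>* i j" using conn i j unfolding connected_graph_def by blast
  then show ?thesis
    by (induction rule: rtranclp_induct) (auto dest: step)
qed

lemma K_dims[simp]: "dim_row (Kmat N es w m) = N" "dim_col (Kmat N es w m) = N"
  using K_carrier[of N es w m] unfolding carrier_mat_def by auto

lemma K_sym_form: assumes x: "x \<in> carrier_vec N" and y: "y \<in> carrier_vec N"
  shows "x \<bullet> (Kmat N es w m *\<^sub>v y) = y \<bullet> (Kmat N es w m *\<^sub>v x)"
  unfolding K_bil[OF x y] K_bil[OF y x] by (simp add: mult_ac)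

lemma K_quad: assumes x: "x \<in> carrier_vec N"
  shows "x \<bullet> (Kmat N es w m *\<^sub>v x) = (\<Sum>l<length es. w l * (edif N es m x $ l)^2)"
  unfolding K_bil[OF x x] by (simp add: power2_eq_square mult_ac)

lemma K_psd: assumes x: "x \<in> carrier_vec N" and wpos: "\<forall>l < length es. w l > 0"
  shows "0 \<le> x \<bullet> (Kmat N es w m *\<^sub>v x)"
  unfolding K_quad[OF x] using wpos by (intro sum_nonneg) (simp add: less_imp_le)

lemma K_entry_sym: assumes i: "i < N" and j: "j < N"
  shows "Kmat N es w m $$ (i,j) = Kmat N es w m $$ (j,i)"
proof -
  let ?K = "Kmat N es w m"
  have e: "unit_vec N a \<bullet> (?K *\<^sub>v unit_vec N b) = ?K $$ (a,b)" if "a < N" "b < N" for a b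
  proof -
    have K: "?K \<in> carrier_mat N N" by simp
    have "unit_vec N a \<bullet> (?K *\<^sub>v unit_vec N b) = (?K *\<^sub>v unit_vec N b) $ a"
      using that K by (intro scalar_prod_left_unit) (auto simp: mv_carrier_iff)
    also have "\<dots> = ?K $$ (a,b)" using that K by simp
    finally show ?thesis .
  qed
  show ?thesis using K_sym_form[of "unit_vec N i" N "unit_vec N j" es w m] e[OF i j] e[OF j i] by simp
qed

definition vsq :: "nat \<Rightarrow> (nat \<Rightarrow> real) \<Rightarrow> real vec" where
  "vsq N m = vec N (\<lambda>i. sqrt (m i))"

lemma vsq_carrier[simp]: "vsq N m \<in> carrier_vec N" unfolding vsq_def by simp

lemma edif_vsq: assumes g: "graph_ok N es" and mpos: "\<forall>i < N. m i > 0" and l: "l < length es"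
  shows "edif N es m (vsq N m) $ l = 0"
proof -
  have a: "fst (es!l) < N" "snd (es!l) < N" using g l unfolding graph_ok_def by auto
  have "m (fst (es!l)) > 0" "m (snd (es!l)) > 0" using a mpos by auto
  then show ?thesis unfolding edif_eq[OF g vsq_carrier] using l a by (simp add: vsq_def)
qed

lemma K_vsq: assumes g: "graph_ok N es" and mpos: "\<forall>i < N. m i > 0"
  shows "Kmat N es w m *\<^sub>v vsq N m = 0\<^sub>v N"
proof (rule eq_vecI)
  fix i assume "i < dim_vec (0\<^sub>v N :: real vec)"
  hence i: "i < N" by simp
  have "(Kmat N es w m *\<^sub>v vsq N m) $ i = unit_vec N i \<bullet> (Kmat N es w m *\<^sub>v vsq N m)"
    using i by (intro scalar_prod_left_unit[symmetric]) (auto simp: mv_carrier_iff)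
  also have "\<dots> = 0" unfolding K_bil[OF unit_vec_carrier vsq_carrier] using edif_vsq[OF g mpos] by simp
  finally show "(Kmat N es w m *\<^sub>v vsq N m) $ i = (0\<^sub>v N :: real vec) $ i" using i by simp
qed simp

lemma K_kernel: assumes g: "graph_ok N es" and conn: "connected_graph N es"
  and wpos: "\<forall>l < length es. w l > 0" and mpos: "\<forall>i < N. m i > 0" and N: "0 < N"
  and x: "x \<in> carrier_vec N" and q: "x \<bullet> (Kmat N es w m *\<^sub>v x) = 0"
  shows "\<exists>c. x = c \<cdot>\<^sub>v vsq N m"
proof -
  have "\<forall>l\<in>{..<length es}. w l * (edif N es m x $ l)^2 = 0"
    using q unfolding K_quad[OF x] using wpos by (subst (asm) sum_nonneg_eq_0_iff) (auto simp: less_imp_le)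
  hence e0: "\<forall>l<length es. edif N es m x $ l = 0" using wpos by (metis lessThan_iff mult_eq_0_iff order_less_irrefl power_eq_0_iff)
  define z where "z = (\<lambda>i. x $ i / sqrt (m i))"
  have zz: "\<forall>l<length es. z (fst (es!l)) = z (snd (es!l))"
    using e0 unfolding z_def edif_eq[OF g x] by auto
  define c where "c = z 0"
  have "x = c \<cdot>\<^sub>v vsq N m"
  proof (rule eq_vecI)
    fix i assume "i < dim_vec (c \<cdot>\<^sub>v vsq N m)"
    hence i: "i < N" by (simp add: vsq_def)
    have "z i = c" unfolding c_def by (rule conn_const[OF conn zz i N])
    moreover have "sqrt (m i) > 0" using mpos i by simp
    ultimately have "x $ i = c * sqrt (m i)" unfolding z_def by (simp add: field_simps)
    then show "x $ i = (c \<cdot>\<^sub>v vsq N m) $ i" using i by (simp add: vsq_def)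
  qed (use x in \<open>simp add: vsq_def\<close>)
  then show ?thesis by blast
qed

lemma diag_one: "diag_of n (\<lambda>_. 1) = 1\<^sub>m n"
  unfolding diag_of_def by (rule eq_matI) auto

lemma diag_cong: "(\<And>i. i < n \<Longrightarrow> f i = g i) \<Longrightarrow> diag_of n f = diag_of n g"
  unfolding diag_of_def by (rule eq_matI) auto

lemma charpoly_eq: assumes mpos: "\<forall>i < N. m i > 0"
  shows "char_poly (Minv N m * LB N es w) = char_poly (Kmat N es w m)"
proof -
  let ?P = "Minvsqrt N m" and ?Q = "Msqrt N m" and ?L = "LB N es w"
  have PQ: "?P * ?Q = 1\<^sub>m N" unfolding Minvsqrt_def Msqrt_def diag_mult diag_one[symmetric]
    using mpos by (intro diag_cong) auto
  have QP: "?Q * ?P = 1\<^sub>m N" unfolding Minvsqrt_def Msqrt_def diag_mult diag_one[symmetric]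
    using mpos by (intro diag_cong) auto
  have PP: "?P * ?P = Minv N m" unfolding Minvsqrt_def Minv_def diag_mult
    using mpos by (intro diag_cong) (simp add: real_sqrt_mult[symmetric] less_imp_le)
  have PL: "?P * ?L \<in> carrier_mat N N" by (rule mult_carrier_mat[of _ N N]) auto
  have PLP: "?P * ?L * ?P \<in> carrier_mat N N" by (rule mult_carrier_mat[OF PL]) auto
  have "?P * Kmat N es w m * ?Q = ?P * (((?P * ?L) * ?P) * ?Q)"
    unfolding Kmat_def by (rule assoc_mult_mat[of _ N N _ N _ N]) (auto simp: PLP)
  also have "((?P * ?L) * ?P) * ?Q = (?P * ?L) * (?P * ?Q)"
    by (rule assoc_mult_mat[of _ N N _ N _ N]) (auto simp: PL)
  also have "\<dots> = ?P * ?L" unfolding PQ using PL by (simp add: right_mult_one_mat)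
  also have "?P * (?P * ?L) = (?P * ?P) * ?L"
    by (rule assoc_mult_mat[symmetric, of _ N N _ N _ N]) auto
  finally have eq: "Minv N m * ?L = ?P * Kmat N es w m * ?Q" unfolding PP by simp
  have MLc: "Minv N m * ?L \<in> carrier_mat N N" by (rule mult_carrier_mat[of _ N N]) auto
  have "similar_mat (Minv N m * ?L) (Kmat N es w m)"
    unfolding similar_mat_def similar_mat_wit_def Let_def
    by (rule exI[of _ ?P], rule exI[of _ ?Q]) (simp add: PQ QP eq[symmetric] MLc)
  then show ?thesis by (rule char_poly_similar)
qed

lemma proots_lin_prod: "proots (\<Prod>r\<leftarrow>rs. [:- r, 1:]) = mset (rs :: real list)"
proof (induction rs)
  case (Cons r rs)
  have nz: "(\<Prod>r\<leftarrow>rs. [:- r, 1:]) \<noteq> (0 :: real poly)" by (auto simp: prod_list_zero_iff)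
  have "proots (\<Prod>r\<leftarrow>r # rs. [:- r, 1:]) = proots [:- r, 1:] + proots (\<Prod>r\<leftarrow>rs. [:- r, 1:])"
    by (simp only: list.map prod_list.Cons, rule proots_mult) (use nz in auto)
  then show ?case using Cons by (simp add: proots_linear_factor)
qed simp

lemma eigs_facts: assumes mpos: "\<forall>i < N. m i > 0"
  shows "length (eigs N es w m) = N" "sorted (eigs N es w m)"
    "\<And>\<mu> x. x \<in> carrier_vec N \<Longrightarrow> x \<noteq> 0\<^sub>v N \<Longrightarrow> Kmat N es w m *\<^sub>v x = \<mu> \<cdot>\<^sub>v x \<Longrightarrow> \<mu> \<in> set (eigs N es w m)"
proof -
  obtain rs where rs: "char_poly (Kmat N es w m) = (\<Prod>r\<leftarrow>rs. [:- r, 1:])" "length rs = N"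
    using char_split[OF K_carrier[of N es w m]] K_entry_sym[of _ N _ es w m] by blast
  have e: "eigs N es w m = sorted_list_of_multiset (mset rs)"
    unfolding eigs_def charpoly_eq[OF mpos] rs(1) proots_lin_prod ..
  show "length (eigs N es w m) = N" unfolding e using rs(2) by simp
  show "sorted (eigs N es w m)" unfolding e by simp
  fix \<mu> x assume x: "x \<in> carrier_vec N" "x \<noteq> 0\<^sub>v N" "Kmat N es w m *\<^sub>v x = \<mu> \<cdot>\<^sub>v x"
  have "eigenvalue (Kmat N es w m) \<mu>" unfolding eigenvalue_def eigenvector_def using x by auto
  hence "poly (char_poly (Kmat N es w m)) \<mu> = 0" using eigenvalue_root_char_poly[OF K_carrier] by blast
  hence "\<mu> \<in> set rs" unfolding rs(1) by (auto simp: poly_prod_list prod_list_zero_iff)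
  then show "\<mu> \<in> set (eigs N es w m)" unfolding e by simp
qed

lemma S_top: assumes mpos: "\<forall>i < N. m i > 0" and N: "0 < N" and x: "x \<in> carrier_vec N"
  shows "x \<bullet> (Kmat N es w m *\<^sub>v x) \<le> lambdaN N es w m * (x \<bullet> x)"
proof -
  have sym: "\<forall>u\<in>carrier_vec N. \<forall>v\<in>carrier_vec N. u \<bullet> (Kmat N es w m *\<^sub>v v) = v \<bullet> (Kmat N es w m *\<^sub>v u)"
    using K_sym_form by blast
  obtain \<mu> where mu: "\<exists>x\<in>carrier_vec N. x \<noteq> 0\<^sub>v N \<and> Kmat N es w m *\<^sub>v x = \<mu> \<cdot>\<^sub>v x"
    "\<forall>x\<in>carrier_vec N. x \<bullet> (Kmat N es w m *\<^sub>v x) \<le> \<mu> * (x \<bullet> x)"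
    using top_eig[OF K_carrier N sym] by blast
  have "\<mu> \<in> set (eigs N es w m)" using mu(1) eigs_facts(3)[OF mpos] by blast
  then obtain j where j: "j < N" "eigs N es w m ! j = \<mu>" using eigs_facts(1)[OF mpos] by (auto simp: in_set_conv_nth)
  have "eigs N es w m ! j \<le> eigs N es w m ! (N - 1)"
    by (rule sorted_nth_mono) (use j eigs_facts(1,2)[OF mpos, of es w] N in auto)
  hence "\<mu> \<le> lambdaN N es w m" unfolding lambdaN_def using j by simp
  then have "\<mu> * (x \<bullet> x) \<le> lambdaN N es w m * (x \<bullet> x)" using self_dot_nonneg[of x] by (rule mult_right_mono)
  with mu(2) x show ?thesis by force
qed

lemma S_low: assumes g: "graph_ok N es" and conn: "connected_graph N es"
  and wpos: "\<forall>l < length es. w l > 0" and mpos: "\<forall>i < N. m i > 0" and N: "0 < N"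
  and ex: "\<exists>y\<in>carrier_vec N. y \<noteq> 0\<^sub>v N \<and> vsq N m \<bullet> y = 0"
  and x: "x \<in> carrier_vec N" and vx: "vsq N m \<bullet> x = 0"
  shows "lambda2 N es w m * (x \<bullet> x) \<le> x \<bullet> (Kmat N es w m *\<^sub>v x)"
proof -
  let ?K = "Kmat N es w m" and ?v = "vsq N m" and ?L = "eigs N es w m"
  have sym: "\<forall>u\<in>carrier_vec N. \<forall>v\<in>carrier_vec N. u \<bullet> (?K *\<^sub>v v) = v \<bullet> (?K *\<^sub>v u)"
    using K_sym_form by blast
  have psd: "\<forall>u\<in>carrier_vec N. 0 \<le> u \<bullet> (?K *\<^sub>v u)" using K_psd[OF _ wpos] by blast
  have v0: "?v \<noteq> 0\<^sub>v N"
  proof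
    assume "?v = 0\<^sub>v N"
    hence "?v $ 0 = 0" using N by simp
    moreover have "?v $ 0 > 0" using N mpos by (simp add: vsq_def)
    ultimately show False by simp
  qed
  have Kv: "?K *\<^sub>v ?v = 0\<^sub>v N" by (rule K_vsq[OF g mpos])
  obtain \<nu> y where y: "y \<in> carrier_vec N" "y \<noteq> 0\<^sub>v N" "?v \<bullet> y = 0" "?K *\<^sub>v y = \<nu> \<cdot>\<^sub>v y"
    and low: "\<forall>y\<in>carrier_vec N. ?v \<bullet> y = 0 \<longrightarrow> \<nu> * (y \<bullet> y) \<le> y \<bullet> (?K *\<^sub>v y)"
    using low_eig[OF K_carrier sym psd vsq_carrier v0 Kv ex] by blast
  have nu: "\<nu> > 0"
  proof (rule ccontr)
    assume "\<not> \<nu> > 0"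
    have "y \<bullet> (?K *\<^sub>v y) = \<nu> * (y \<bullet> y)" using y by simp
    also have "\<dots> \<le> 0" using \<open>\<not> \<nu> > 0\<close> self_dot_nonneg[of y] by (simp add: mult_nonpos_nonneg)
    finally have "y \<bullet> (?K *\<^sub>v y) = 0" using psd y by (meson antisym)
    then obtain c where c: "y = c \<cdot>\<^sub>v ?v" using K_kernel[OF g conn wpos mpos N y(1)] by blast
    have vv: "0 < ?v \<bullet> ?v" by (rule self_dot_pos[OF vsq_carrier v0])
    have "0 = ?v \<bullet> y" using y by simp
    also have "\<dots> = c * (?v \<bullet> ?v)" unfolding c by simp
    finally have "c = 0" using vv by simp
    have "(0::real) \<cdot>\<^sub>v ?v = 0\<^sub>v N" by (rule eq_vecI) (auto simp: vsq_def)
    with c y(2) \<open>c = 0\<close> show False by simp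
  qed
  have in_nu: "\<nu> \<in> set ?L" using eigs_facts(3)[OF mpos y(1,2,4)] .
  have Kv': "?K *\<^sub>v ?v = (0::real) \<cdot>\<^sub>v ?v" unfolding Kv by (rule eq_vecI) (auto simp: vsq_def)
  have in0: "0 \<in> set ?L" by (rule eigs_facts(3)[OF mpos vsq_carrier v0 Kv'])
  obtain j where j: "j < N" "?L ! j = \<nu>" using in_nu eigs_facts(1)[OF mpos] by (auto simp: in_set_conv_nth)
  obtain i where i: "i < N" "?L ! i = 0" using in0 eigs_facts(1)[OF mpos] by (auto simp: in_set_conv_nth)
  have srt: "sorted ?L" "length ?L = N" using eigs_facts(1,2)[OF mpos] by auto
  have "j \<noteq> 0"
  proof
    assume "j = 0"
    have "?L ! 0 \<le> ?L ! i" using srt i by (intro sorted_nth_mono) auto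
    with j i nu \<open>j = 0\<close> show False by simp
  qed
  hence "?L ! 1 \<le> ?L ! j" using srt j by (intro sorted_nth_mono) auto
  hence "lambda2 N es w m \<le> \<nu>" unfolding lambda2_def using j by simp
  hence "lambda2 N es w m * (x \<bullet> x) \<le> \<nu> * (x \<bullet> x)" using self_dot_nonneg[of x] by (rule mult_right_mono)
  also have "\<dots> \<le> x \<bullet> (?K *\<^sub>v x)" using low x vx by blast
  finally show ?thesis .
qed

lemma ea_eq: fixes Y :: "real mat" assumes Y: "Y \<in> carrier_mat N (N - 1)" and th: "th \<in> carrier_vec (N - 1)"
  shows "edge_angles N es m Y th = edif N es m (Y *\<^sub>v th)"
proof -
  let ?A = "transpose_mat (inc_mat N es)" and ?M = "Minvsqrt N m"
  have AM: "?A * ?M \<in> carrier_mat (length es) N" by (rule mult_carrier_mat) auto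
  have Yt: "Y *\<^sub>v th \<in> carrier_vec N" using Y th by simp
  have "edge_angles N es m Y th = (?A * ?M) *\<^sub>v (Y *\<^sub>v th)"
    unfolding edge_angles_def by (rule assoc_mult_mat_vec[OF AM Y th])
  also have "\<dots> = ?A *\<^sub>v (?M *\<^sub>v (Y *\<^sub>v th))" by (rule assoc_mult_mat_vec[OF _ _ Yt]) auto
  finally show ?thesis unfolding edif_def .
qed

lemma ea_carrier: "edge_angles N es m Y th \<in> carrier_vec (length es)"
  unfolding edge_angles_def by (simp add: mv_carrier_iff)

lemma gU_eq: fixes Y :: "real mat" assumes Y: "Y \<in> carrier_mat N (N - 1)"
  shows "gradU N es w m Y th = transpose_mat Y *\<^sub>v (Minvsqrt N m *\<^sub>v (inc_mat N es *\<^sub>v (Gam es w *\<^sub>v map_vec sin (edge_angles N es m Y th))))"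
proof -
  let ?s = "map_vec sin (edge_angles N es m Y th)" and ?YT = "transpose_mat Y" and ?M = "Minvsqrt N m"
    and ?A = "inc_mat N es" and ?G = "Gam es w"
  have s: "?s \<in> carrier_vec (length es)" using ea_carrier by simp
  have Gs: "?G *\<^sub>v ?s \<in> carrier_vec (length es)" by (simp add: mv_carrier_iff)
  have AGs: "?A *\<^sub>v (?G *\<^sub>v ?s) \<in> carrier_vec N" by (simp add: mv_carrier_iff)
  have YT: "?YT \<in> carrier_mat (N - 1) N" using Y by simp
  have YM: "?YT * ?M \<in> carrier_mat (N - 1) N" by (rule mult_carrier_mat[OF YT]) simp
  have YMA: "?YT * ?M * ?A \<in> carrier_mat (N - 1) (length es)" by (rule mult_carrier_mat[OF YM]) simp
  have "gradU N es w m Y th = (?YT * ?M * ?A) *\<^sub>v (?G *\<^sub>v ?s)"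
    unfolding gradU_def by (rule assoc_mult_mat_vec[OF YMA _ s]) simp
  also have "\<dots> = (?YT * ?M) *\<^sub>v (?A *\<^sub>v (?G *\<^sub>v ?s))" by (rule assoc_mult_mat_vec[OF YM _ Gs]) simp
  also have "\<dots> = ?YT *\<^sub>v (?M *\<^sub>v (?A *\<^sub>v (?G *\<^sub>v ?s)))" by (rule assoc_mult_mat_vec[OF YT _ AGs]) simp
  finally show ?thesis .
qed

lemma adj: fixes Y :: "real mat" assumes Y: "Y \<in> carrier_mat N (N - 1)" and g: "g \<in> carrier_vec (length es)"
  and z: "z \<in> carrier_vec (N - 1)"
  shows "(transpose_mat Y *\<^sub>v (Minvsqrt N m *\<^sub>v (inc_mat N es *\<^sub>v g))) \<bullet> z = g \<bullet> edif N es m (Y *\<^sub>v z)"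
proof -
  let ?M = "Minvsqrt N m" and ?A = "inc_mat N es"
  have p: "?M *\<^sub>v (?A *\<^sub>v g) \<in> carrier_vec N" by (simp add: mv_carrier_iff)
  have Ag: "?A *\<^sub>v g \<in> carrier_vec N" by (simp add: mv_carrier_iff)
  have Yz: "Y *\<^sub>v z \<in> carrier_vec N" using Y z by simp
  have MYz: "?M *\<^sub>v (Y *\<^sub>v z) \<in> carrier_vec N" by (simp add: mv_carrier_iff)
  have "(transpose_mat Y *\<^sub>v (?M *\<^sub>v (?A *\<^sub>v g))) \<bullet> z = (?M *\<^sub>v (?A *\<^sub>v g)) \<bullet> (Y *\<^sub>v z)"
    by (rule transpose_vec_mult_scalar[OF Y z p])
  also have "\<dots> = (?A *\<^sub>v g) \<bullet> (?M *\<^sub>v (Y *\<^sub>v z))"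
    using transpose_vec_mult_scalar[OF Mis_carrier Yz Ag] by (simp add: Minvsqrt_def)
  also have "\<dots> = (?M *\<^sub>v (Y *\<^sub>v z)) \<bullet> (?A *\<^sub>v g)" by (rule comm_scalar_prod[OF Ag MYz])
  also have "\<dots> = (transpose_mat ?A *\<^sub>v (?M *\<^sub>v (Y *\<^sub>v z))) \<bullet> g"
    using transpose_vec_mult_scalar[OF inc_carrier g MYz] by simp
  also have "\<dots> = g \<bullet> edif N es m (Y *\<^sub>v z)" unfolding edif_def
    by (rule comm_scalar_prod[of _ "length es"]) (use g in \<open>auto simp: mv_carrier_iff\<close>)
  finally show ?thesis .
qed

lemma U_eq: "Upot N es w m Y th = - (\<Sum>l<length es. w l * cos (edge_angles N es m Y th $ l))"
proof -
  have c: "map_vec cos (edge_angles N es m Y th) \<in> carrier_vec (length es)" using ea_carrier by simp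
  show ?thesis unfolding Upot_def Gam_def diag_mult_vec[OF c] using ea_carrier[of N es m Y th]
    by (simp add: scalar_prod_def lessThan_atLeast0)
qed

lemma Gdot: assumes s: "s \<in> carrier_vec (length es)" and e: "e \<in> carrier_vec (length es)"
  shows "(Gam es w *\<^sub>v s) \<bullet> e = (\<Sum>l<length es. w l * s $ l * e $ l)"
  unfolding Gam_def diag_mult_vec[OF s] using e by (simp add: scalar_prod_def lessThan_atLeast0)

lemma Y_norm: fixes Y :: "real mat" assumes Y: "Y \<in> carrier_mat N (N - 1)" and Yorth: "transpose_mat Y * Y = 1\<^sub>m (N - 1)"
  and u: "u \<in> carrier_vec (N - 1)"
  shows "(Y *\<^sub>v u) \<bullet> (Y *\<^sub>v u) = u \<bullet> u"
proof -
  have Yu: "Y *\<^sub>v u \<in> carrier_vec N" using Y u by simp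
  have "(Y *\<^sub>v u) \<bullet> (Y *\<^sub>v u) = (transpose_mat Y *\<^sub>v (Y *\<^sub>v u)) \<bullet> u"
    using transpose_vec_mult_scalar[OF Y u Yu] by simp
  also have "transpose_mat Y *\<^sub>v (Y *\<^sub>v u) = (transpose_mat Y * Y) *\<^sub>v u"
    by (rule assoc_mult_mat_vec[symmetric, of _ "N - 1" N _ "N - 1"]) (use Y u in auto)
  also have "\<dots> = u" unfolding Yorth using u by simp
  finally show ?thesis .
qed

lemma YT_norm: fixes Y :: "real mat" assumes Y: "Y \<in> carrier_mat N (N - 1)" and Yorth: "transpose_mat Y * Y = 1\<^sub>m (N - 1)"
  and p: "p \<in> carrier_vec N"
  shows "(transpose_mat Y *\<^sub>v p) \<bullet> (transpose_mat Y *\<^sub>v p) \<le> p \<bullet> p"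
proof -
  let ?c = "transpose_mat Y *\<^sub>v p"
  have c: "?c \<in> carrier_vec (N - 1)" using Y p by simp
  have Yc: "Y *\<^sub>v ?c \<in> carrier_vec N" using Y c by simp
  have "?c \<bullet> ?c = p \<bullet> (Y *\<^sub>v ?c)" by (rule transpose_vec_mult_scalar[OF Y c p])
  hence "(?c \<bullet> ?c)^2 \<le> (p \<bullet> p) * ((Y *\<^sub>v ?c) \<bullet> (Y *\<^sub>v ?c))" using CS_vec[OF p Yc] by simp
  also have "\<dots> = (p \<bullet> p) * (?c \<bullet> ?c)" using Y_norm[OF Y Yorth c] by simp
  finally have h: "(?c \<bullet> ?c) * (?c \<bullet> ?c) \<le> (p \<bullet> p) * (?c \<bullet> ?c)" by (simp add: power2_eq_square)
  show ?thesis
  proof (cases "?c \<bullet> ?c = 0")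
    case True then show ?thesis using self_dot_nonneg[of p] by simp
  next
    case False
    with self_dot_nonneg[of ?c] have "?c \<bullet> ?c > 0" by simp
    with h show ?thesis by simp
  qed
qed

lemma vsq_Y: fixes Y :: "real mat" assumes Y: "Y \<in> carrier_mat N (N - 1)"
  and Ynull: "\<forall>j < N - 1. vec N (\<lambda>i. sqrt (m i)) \<bullet> col Y j = 0"
  and u: "u \<in> carrier_vec (N - 1)"
  shows "vsq N m \<bullet> (Y *\<^sub>v u) = 0"
proof -
  have "vsq N m \<bullet> (Y *\<^sub>v u) = (transpose_mat Y *\<^sub>v vsq N m) \<bullet> u"
    using transpose_vec_mult_scalar[OF Y u vsq_carrier] by simp
  also have "transpose_mat Y *\<^sub>v vsq N m = 0\<^sub>v (N - 1)"
  proof (rule eq_vecI)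
    fix j assume "j < dim_vec (0\<^sub>v (N - 1) :: real vec)"
    hence j: "j < N - 1" by simp
    have "(transpose_mat Y *\<^sub>v vsq N m) $ j = col Y j \<bullet> vsq N m" using j Y by simp
    also have "\<dots> = vsq N m \<bullet> col Y j" by (rule comm_scalar_prod[of _ N]) (use j Y in auto)
    also have "\<dots> = 0" using Ynull j unfolding vsq_def by simp
    finally show "(transpose_mat Y *\<^sub>v vsq N m) $ j = (0\<^sub>v (N - 1) :: real vec) $ j" using j by simp
  qed (use Y in simp)
  also have "\<dots> \<bullet> u = 0" using u by simp
  finally show ?thesis .
qed

lemma Ms_norm: assumes mpos: "\<forall>i < N. m i > 0" and d: "d \<in> carrier_vec N"
  shows "(Msqrt N m *\<^sub>v d) \<bullet> (Msqrt N m *\<^sub>v d) = d \<bullet> (Mmat N m *\<^sub>v d)"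
  unfolding Msqrt_def Mmat_def diag_mult_vec[OF d] using d mpos
  by (auto simp: scalar_prod_def intro!: sum.cong simp: less_imp_le algebra_simps)

lemma edif_minus: assumes g: "graph_ok N es" and p: "p \<in> carrier_vec N" and q: "q \<in> carrier_vec N"
  and l: "l < length es"
  shows "edif N es m (p - q) $ l = edif N es m p $ l - edif N es m q $ l"
proof -
  have a: "fst (es!l) < N" "snd (es!l) < N" using g l unfolding graph_ok_def by auto
  have pq: "p - q \<in> carrier_vec N" using p q by simp
  show ?thesis unfolding edif_eq[OF g pq] edif_eq[OF g p] edif_eq[OF g q] using l a p q
    by (simp add: diff_divide_distrib)
qed

lemma abs_cross: fixes X gg cc \<eta> :: real
  assumes X: "X^2 \<le> gg * cc" and gg: "0 \<le> gg" and cc: "0 \<le> cc"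
  shows "\<bar>\<eta> * X\<bar> \<le> \<eta>^2 * gg + cc / 4"
proof -
  have "(\<bar>\<eta> * X\<bar>)^2 = \<eta>^2 * X^2" by (simp add: power_mult_distrib)
  also have "\<dots> \<le> \<eta>^2 * (gg * cc)" using X by (simp add: mult_left_mono)
  also have "\<dots> \<le> (\<eta>^2 * gg + cc / 4)^2"
    using zero_le_power2[of "\<eta>^2 * gg - cc / 4"] by (simp add: power2_eq_square algebra_simps)
  finally show ?thesis by (rule power2_le_imp_le) (use gg cc in simp)
qed

theorem lemmaD3:
  fixes N :: nat and es :: "(nat \<times> nat) list" and w m :: "nat \<Rightarrow> real"
    and Y :: "real mat" and \<rho> k \<eta> :: real
    and d\<omega> th ths :: "real vec"
  assumes N2: "N \<ge> 2"
    and graph: "graph_ok N es" and conn: "connected_graph N es"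
    and wpos: "\<forall>l < length es. w l > 0"
    and mpos: "\<forall>i < N. m i > 0"
    and Ycar: "Y \<in> carrier_mat N (N - 1)"
    and Yorth: "transpose_mat Y * Y = 1\<^sub>m (N - 1)"
    and Ynull: "\<forall>j < N - 1. vec N (\<lambda>i. sqrt (m i)) \<bullet> col Y j = 0"
    and Yspan: "\<forall>x \<in> carrier_vec N. vec N (\<lambda>i. sqrt (m i)) \<bullet> x = 0 \<longrightarrow>
                  (\<exists>c \<in> carrier_vec (N - 1). x = Y *\<^sub>v c)"
    and rho: "0 < \<rho>" "\<rho> < pi / 2"
    and k: "k > 0" and eta: "\<eta> > 0"
    and dw: "d\<omega> \<in> carrier_vec N"
    and th: "th \<in> Sset N es m Y \<rho>" and ths: "ths \<in> Sset N es m Y \<rho>"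
  shows
    "let M = Mmat N m; d\<theta> = th - ths;
         U = Upot N es w m Y; gU = gradU N es w m Y;
         l2 = lambda2 N es w m; lN = lambdaN N es w m;
         V = 1/2 * (d\<omega> \<bullet> (M *\<^sub>v d\<omega>))
             + k * (U th - U ths - gU ths \<bullet> (th - ths))
             + \<eta> * ((gU th - gU ths) \<bullet> (transpose_mat Y * Msqrt N m *\<^sub>v d\<omega>))
     in V \<le> 3/4 * (d\<omega> \<bullet> (M *\<^sub>v d\<omega>)) + (1/2 * k * lN + \<eta>^2 * lN^2) * (d\<theta> \<bullet> d\<theta>)
      \<and> V \<ge> 1/4 * (d\<omega> \<bullet> (M *\<^sub>v d\<omega>)) + (1/2 * k * l2 * sin \<rho> - \<eta>^2 * lN^2) * (d\<theta> \<bullet> d\<theta>)"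
proof -
  let ?E = "length es" and ?K = "Kmat N es w m" and ?l2 = "lambda2 N es w m" and ?lN = "lambdaN N es w m"
  let ?U = "Upot N es w m Y" and ?gU = "gradU N es w m Y"
  have N0: "0 < N" using N2 by simp
  have Yc: "Y \<in> carrier_mat N (N - 1)" by (rule Ycar)
  have thc: "th \<in> carrier_vec (N - 1)" and tha: "\<forall>l<?E. \<bar>edge_angles N es m Y th $ l\<bar> < pi / 2 - \<rho>"
    using th unfolding Sset_def by auto
  have thsc: "ths \<in> carrier_vec (N - 1)" and thsa: "\<forall>l<?E. \<bar>edge_angles N es m Y ths $ l\<bar> < pi / 2 - \<rho>"
    using ths unfolding Sset_def by auto
  define a where "a = edge_angles N es m Y th"
  define b where "b = edge_angles N es m Y ths"
  define dt where "dt = th - ths"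
  have dtc: "dt \<in> carrier_vec (N - 1)" unfolding dt_def using thc thsc by simp
  define d where "d = edif N es m (Y *\<^sub>v dt)"
  have Ydt: "Y *\<^sub>v dt \<in> carrier_vec N" using Yc dtc by simp
  have Ydt_eq: "Y *\<^sub>v dt = Y *\<^sub>v th - Y *\<^sub>v ths" unfolding dt_def
    by (rule mult_minus_distrib_mat_vec[OF Yc thc thsc])
  have dl: "d $ l = a $ l - b $ l" if l: "l < ?E" for l
    unfolding d_def Ydt_eq a_def b_def ea_eq[OF Yc thc] ea_eq[OF Yc thsc]
    by (rule edif_minus[OF graph _ _ l]) (use Yc thc thsc in auto)
  define Q where "Q = (\<Sum>l<?E. w l * (d $ l)^2)"
  have Qeq: "Q = (Y *\<^sub>v dt) \<bullet> (?K *\<^sub>v (Y *\<^sub>v dt))" unfolding Q_def d_def K_quad[OF Ydt] ..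
  have Dn: "(Y *\<^sub>v dt) \<bullet> (Y *\<^sub>v dt) = dt \<bullet> dt" by (rule Y_norm[OF Yc Yorth dtc])
  have Q0: "0 \<le> Q" unfolding Qeq by (rule K_psd[OF Ydt wpos])
  have QN: "Q \<le> ?lN * (dt \<bullet> dt)" unfolding Qeq Dn[symmetric] by (rule S_top[OF mpos N0 Ydt])
  have ex: "\<exists>y\<in>carrier_vec N. y \<noteq> 0\<^sub>v N \<and> vsq N m \<bullet> y = 0"
  proof -
    have n1: "0 < N - 1" using N2 by simp
    let ?u = "unit_vec (N - 1) 0 :: real vec"
    have u: "?u \<in> carrier_vec (N - 1)" by simp
    have Yu: "Y *\<^sub>v ?u \<in> carrier_vec N" using Yc u by simp
    have "(Y *\<^sub>v ?u) \<bullet> (Y *\<^sub>v ?u) = ?u \<bullet> ?u" by (rule Y_norm[OF Yc Yorth u])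
    also have "\<dots> = 1" using n1 by simp
    finally have "Y *\<^sub>v ?u \<noteq> 0\<^sub>v N" by auto
    moreover have "vsq N m \<bullet> (Y *\<^sub>v ?u) = 0" by (rule vsq_Y[OF Yc Ynull u])
    ultimately show ?thesis using Yu by blast
  qed
  have Q2: "?l2 * (dt \<bullet> dt) \<le> Q" unfolding Qeq Dn[symmetric]
    by (rule S_low[OF graph conn wpos mpos N0 ex Ydt vsq_Y[OF Yc Ynull dtc]])
  have sb: "map_vec sin b \<in> carrier_vec ?E" unfolding b_def using ea_carrier by simp
  have sa: "map_vec sin a \<in> carrier_vec ?E" unfolding a_def using ea_carrier by simp
  have dc: "d \<in> carrier_vec ?E" unfolding d_def by simp
  have ac: "a \<in> carrier_vec ?E" "b \<in> carrier_vec ?E" unfolding a_def b_def using ea_carrier by auto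
  have "?gU ths \<bullet> dt = (Gam es w *\<^sub>v map_vec sin b) \<bullet> d"
    unfolding gU_eq[OF Yc] d_def b_def by (rule adj[OF Yc _ dtc]) (simp add: mv_carrier_iff)
  also have "\<dots> = (\<Sum>l<?E. w l * map_vec sin b $ l * d $ l)" by (rule Gdot[OF sb dc])
  also have "\<dots> = (\<Sum>l<?E. w l * sin (b $ l) * d $ l)" by (rule sum.cong) (use ac in auto)
  finally have gUdt: "?gU ths \<bullet> dt = (\<Sum>l<?E. w l * sin (b $ l) * d $ l)" .
  define Br where "Br = ?U th - ?U ths - ?gU ths \<bullet> (th - ths)"
  have Breq: "Br = (\<Sum>l<?E. w l * (cos (b $ l) - cos (a $ l) - sin (b $ l) * (a $ l - b $ l)))"
  proof -
    have "Br = (\<Sum>l<?E. w l * cos (b $ l)) - (\<Sum>l<?E. w l * cos (a $ l)) - (\<Sum>l<?E. w l * sin (b $ l) * d $ l)"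
      unfolding Br_def dt_def[symmetric] gUdt U_eq a_def b_def by simp
    also have "\<dots> = (\<Sum>l<?E. w l * cos (b $ l) - w l * cos (a $ l) - w l * sin (b $ l) * d $ l)"
      by (simp add: sum_subtractf)
    also have "\<dots> = (\<Sum>l<?E. w l * (cos (b $ l) - cos (a $ l) - sin (b $ l) * (a $ l - b $ l)))"
      by (rule sum.cong) (auto simp: dl algebra_simps)
    finally show ?thesis .
  qed
  have bb: "sin \<rho> / 2 * (a $ l - b $ l)^2 \<le> cos (b $ l) - cos (a $ l) - sin (b $ l) * (a $ l - b $ l) \<and>
      cos (b $ l) - cos (a $ l) - sin (b $ l) * (a $ l - b $ l) \<le> (a $ l - b $ l)^2 / 2" if l: "l < ?E" for l
    using breg_bounds[OF rho, of "a $ l" "b $ l"] tha thsa l unfolding a_def b_def by auto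
  have Bup: "Br \<le> Q / 2"
  proof -
    have "Br \<le> (\<Sum>l<?E. w l * ((d $ l)^2 / 2))" unfolding Breq
      using bb wpos by (intro sum_mono mult_left_mono) (auto simp: dl less_imp_le)
    also have "\<dots> = Q / 2" unfolding Q_def by (simp add: sum_divide_distrib)
    finally show ?thesis .
  qed
  have Blow: "sin \<rho> / 2 * Q \<le> Br"
  proof -
    have "sin \<rho> / 2 * Q = (\<Sum>l<?E. w l * (sin \<rho> / 2 * (d $ l)^2))" unfolding Q_def
      by (simp add: sum_distrib_left mult_ac)
    also have "\<dots> \<le> Br" unfolding Breq
      using bb wpos by (intro sum_mono mult_left_mono) (auto simp: dl less_imp_le)
    finally show ?thesis .
  qed
  have gUc: "?gU t \<in> carrier_vec (N - 1)" for t unfolding gU_eq[OF Yc] using Yc by (simp add: mv_carrier_iff)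
  define g where "g = ?gU th - ?gU ths"
  have gc: "g \<in> carrier_vec (N - 1)" unfolding g_def using gUc by simp
  have Yg: "Y *\<^sub>v g \<in> carrier_vec N" using Yc gc by simp
  define e where "e = edif N es m (Y *\<^sub>v g)"
  have ec: "e \<in> carrier_vec ?E" unfolding e_def by simp
  have gg: "g \<bullet> g = (\<Sum>l<?E. w l * (sin (a $ l) - sin (b $ l)) * e $ l)"
  proof -
    have h: "(?gU th - ?gU ths) \<bullet> g = ?gU th \<bullet> g - ?gU ths \<bullet> g"
      by (rule minus_scalar_prod_distrib[OF gUc gUc gc])
    have "g \<bullet> g = ?gU th \<bullet> g - ?gU ths \<bullet> g" using h unfolding g_def[symmetric] .
    also have "?gU th \<bullet> g = (Gam es w *\<^sub>v map_vec sin a) \<bullet> e"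
      unfolding gU_eq[OF Yc] e_def a_def by (rule adj[OF Yc _ gc]) (simp add: mv_carrier_iff)
    also have "\<dots> = (\<Sum>l<?E. w l * map_vec sin a $ l * e $ l)" by (rule Gdot[OF sa ec])
    also have "\<dots> = (\<Sum>l<?E. w l * sin (a $ l) * e $ l)" by (rule sum.cong) (use ac in auto)
    also have "?gU ths \<bullet> g = (Gam es w *\<^sub>v map_vec sin b) \<bullet> e"
      unfolding gU_eq[OF Yc] e_def b_def by (rule adj[OF Yc _ gc]) (simp add: mv_carrier_iff)
    also have "\<dots> = (\<Sum>l<?E. w l * map_vec sin b $ l * e $ l)" by (rule Gdot[OF sb ec])
    also have "\<dots> = (\<Sum>l<?E. w l * sin (b $ l) * e $ l)" by (rule sum.cong) (use ac in auto)
    finally show ?thesis by (simp add: sum_subtractf algebra_simps)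
  qed
  have csg: "(g \<bullet> g)^2 \<le> (\<Sum>l<?E. w l * (sin (a $ l) - sin (b $ l)) * (sin (a $ l) - sin (b $ l))) * (\<Sum>l<?E. w l * e $ l * e $ l)"
    unfolding gg by (rule CS_sum) (use wpos in \<open>auto simp: less_imp_le\<close>)
  have s1: "(\<Sum>l<?E. w l * (sin (a $ l) - sin (b $ l)) * (sin (a $ l) - sin (b $ l))) \<le> Q"
    unfolding Q_def using wpos sin_diff_sq
    by (intro sum_mono) (auto simp: dl mult.assoc power2_eq_square[symmetric] less_imp_le intro!: mult_left_mono)
  have s1n: "0 \<le> (\<Sum>l<?E. w l * (sin (a $ l) - sin (b $ l)) * (sin (a $ l) - sin (b $ l)))"
    using wpos by (intro sum_nonneg) (auto simp: mult.assoc less_imp_le)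
  have eq2: "(\<Sum>l<?E. w l * e $ l * e $ l) = (Y *\<^sub>v g) \<bullet> (?K *\<^sub>v (Y *\<^sub>v g))"
    unfolding e_def K_quad[OF Yg] by (simp add: power2_eq_square mult.assoc)
  have s2: "(\<Sum>l<?E. w l * e $ l * e $ l) \<le> ?lN * (g \<bullet> g)"
    unfolding eq2 Y_norm[OF Yc Yorth gc, symmetric] by (rule S_top[OF mpos N0 Yg])
  have s2n: "0 \<le> (\<Sum>l<?E. w l * e $ l * e $ l)" unfolding eq2 by (rule K_psd[OF Yg wpos])
  have "(g \<bullet> g)^2 \<le> (?lN * (dt \<bullet> dt)) * (?lN * (g \<bullet> g))"
    using csg mult_mono[OF order.trans[OF s1 QN] s2 _ s2n] Q0 QN by linarith
  hence ggb0: "(g \<bullet> g) * (g \<bullet> g) \<le> (?lN^2 * (dt \<bullet> dt)) * (g \<bullet> g)"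
    by (simp add: power2_eq_square algebra_simps)
  have ggb: "g \<bullet> g \<le> ?lN^2 * (dt \<bullet> dt)"
  proof (cases "g \<bullet> g = 0")
    case True then show ?thesis using self_dot_nonneg[of dt] by simp
  next
    case False
    with self_dot_nonneg[of g] have "g \<bullet> g > 0" by simp
    with ggb0 show ?thesis by simp
  qed
  define p where "p = Msqrt N m *\<^sub>v d\<omega>"
  have pc: "p \<in> carrier_vec N" unfolding p_def by (simp add: mv_carrier_iff)
  define c where "c = transpose_mat Y *\<^sub>v p"
  have cc: "c \<in> carrier_vec (N - 1)" unfolding c_def using Yc pc by simp
  have ceq: "transpose_mat Y * Msqrt N m *\<^sub>v d\<omega> = c" unfolding c_def p_def
    by (rule assoc_mult_mat_vec[of _ "N - 1" N _ N]) (use Yc dw in auto)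
  define W where "W = d\<omega> \<bullet> (Mmat N m *\<^sub>v d\<omega>)"
  have ccW: "c \<bullet> c \<le> W" unfolding c_def W_def Ms_norm[OF mpos dw, symmetric] p_def[symmetric]
    by (rule YT_norm[OF Yc Yorth pc])
  have Xcs: "(g \<bullet> c)^2 \<le> (g \<bullet> g) * (c \<bullet> c)" by (rule CS_vec[OF gc cc])
  have cross: "\<bar>\<eta> * (g \<bullet> c)\<bar> \<le> \<eta>^2 * (g \<bullet> g) + (c \<bullet> c) / 4"
    by (rule abs_cross[OF Xcs self_dot_nonneg self_dot_nonneg])
  have cross2: "\<bar>\<eta> * (g \<bullet> c)\<bar> \<le> \<eta>^2 * ?lN^2 * (dt \<bullet> dt) + W / 4"
  proof -
    have "\<eta>^2 * (g \<bullet> g) \<le> \<eta>^2 * (?lN^2 * (dt \<bullet> dt))" using ggb by (simp add: mult_left_mono)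
    then show ?thesis using cross ccW by (simp add: mult.assoc)
  qed
  have kB1: "k * Br \<le> k * (?lN * (dt \<bullet> dt) / 2)" using Bup QN k by (simp add: mult_left_mono)
  have sr: "0 \<le> sin \<rho>" using rho by (simp add: sin_ge_zero)
  have "sin \<rho> / 2 * (?l2 * (dt \<bullet> dt)) \<le> sin \<rho> / 2 * Q" using Q2 sr by (simp add: mult_left_mono)
  hence "sin \<rho> / 2 * (?l2 * (dt \<bullet> dt)) \<le> Br" using Blow by linarith
  hence kB2: "k * (sin \<rho> / 2 * (?l2 * (dt \<bullet> dt))) \<le> k * Br" using k by (simp add: mult_left_mono)
  have V: "1/2 * (d\<omega> \<bullet> (Mmat N m *\<^sub>v d\<omega>)) + k * (?U th - ?U ths - ?gU ths \<bullet> (th - ths))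
             + \<eta> * ((?gU th - ?gU ths) \<bullet> (transpose_mat Y * Msqrt N m *\<^sub>v d\<omega>))
        = 1/2 * W + k * Br + \<eta> * (g \<bullet> c)" unfolding ceq W_def Br_def g_def ..
  have cr: "\<eta> * (g \<bullet> c) \<le> \<eta>^2 * ?lN^2 * (dt \<bullet> dt) + W / 4" "- (\<eta>^2 * ?lN^2 * (dt \<bullet> dt) + W / 4) \<le> \<eta> * (g \<bullet> c)"
    using cross2 by (auto simp: abs_le_iff)
  have e1: "1/2 * k * ?lN * (dt \<bullet> dt) = k * (?lN * (dt \<bullet> dt) / 2)" by (simp add: algebra_simps)
  have e2: "(1/2 * k * ?lN + \<eta>^2 * ?lN^2) * (dt \<bullet> dt) = 1/2 * k * ?lN * (dt \<bullet> dt) + \<eta>^2 * ?lN^2 * (dt \<bullet> dt)"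
    by (simp add: algebra_simps)
  have up: "1/2 * W + k * Br + \<eta> * (g \<bullet> c) \<le> 3/4 * W + (1/2 * k * ?lN + \<eta>^2 * ?lN^2) * (dt \<bullet> dt)"
    unfolding e2 e1 using kB1 cr(1) by linarith
  have e3: "1/2 * k * ?l2 * sin \<rho> * (dt \<bullet> dt) = k * (sin \<rho> / 2 * (?l2 * (dt \<bullet> dt)))" by (simp add: algebra_simps)
  have e4: "(1/2 * k * ?l2 * sin \<rho> - \<eta>^2 * ?lN^2) * (dt \<bullet> dt) = 1/2 * k * ?l2 * sin \<rho> * (dt \<bullet> dt) - \<eta>^2 * ?lN^2 * (dt \<bullet> dt)"
    by (simp add: algebra_simps)
  have lo: "1/4 * W + (1/2 * k * ?l2 * sin \<rho> - \<eta>^2 * ?lN^2) * (dt \<bullet> dt) \<le> 1/2 * W + k * Br + \<eta> * (g \<bullet> c)"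
    unfolding e4 e3 using kB2 cr(2) by linarith
  show ?thesis unfolding Let_def V[unfolded W_def]
    using up lo unfolding W_def dt_def by simp
qed

end
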